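(* Let $L$ be an $r\times m$ matrix of integers of full rank $r$. There exist $\lambda^*>0$ and $p_0$ depending only on $L$ such that for every integer $p\ge p_0$ and every $j/p\in J(L,p)$ we have $\lambda(j)\ge\lambda^*$.
   Context: $\mathbb{T}=\mathbb{R}/\mathbb{Z}$, and $\mathbb{T}^m$ is identified with $[0,1)^m$ with coordinatewise addition mod 1. $\ker_{\mathbb{T}}L=\{x\in\mathbb{T}^m:Lx=0\}$ with normalized Haar probability measure $\mu_L$. For $j\in\mathbb{Z}_p^m$ with coordinates $j(i)\in\{0,\ldots,p-1\}$, $j/p=(j(1)/p,\ldots,j(m)/p)\in\mathbb{T}^m$, and $\lambda(j)=p^{m-r}\mu_L\big((j/p+[0,1/p)^m)\cap\ker_{\mathbb{T}}L\big)$. $J(L,p)=\{j/p:\ j\in\mathbb{Z}_p^m,\ \mu_L\big((j/p+[0,1/p)^m)\cap\ker_{\mathbb{T}}L\big)>0\}$. *)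

theory Defs
  imports "HOL-Probability.Probability"
begin

text \<open>The torus T^m = R^m/Z^m is identified with [0,1)^m (coordinates indexed by the
finite type 'm), with coordinatewise addition mod 1.\<close>

definition torus :: "(real^'m) set" where
  "torus = {x. \<forall>i. 0 \<le> x$i \<and> x$i < 1}"

definition tadd :: "real^'m \<Rightarrow> real^'m \<Rightarrow> real^'m" where
  "tadd x y = (\<chi> i. frac (x$i + y$i))"

definition realmat :: "int^'m^'r \<Rightarrow> real^'m^'r" where
  "realmat L = (\<chi> i j. real_of_int (L$i$j))"

definition kerT :: "int^'m^'r \<Rightarrow> (real^'m) set" where
  "kerT L = {x \<in> torus. \<forall>i. (realmat L *v x)$i \<in> \<int>}"

definition haar :: "(real^'m) set \<Rightarrow> (real^'m) measure" where
  "haar K = (THE \<mu>. prob_space \<mu> \<and> sets \<mu> = sets (restrict_space borel K) \<and>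
      (\<forall>k\<in>K. \<forall>A\<in>sets \<mu>. emeasure \<mu> {x \<in> K. tadd x k \<in> A} = emeasure \<mu> A))"

abbreviation muL :: "int^'m^'r \<Rightarrow> (real^'m) measure" where
  "muL L \<equiv> haar (kerT L)"

definition gridbox :: "nat \<Rightarrow> nat^'m \<Rightarrow> (real^'m) set" where
  "gridbox p j = {x. \<forall>i. real (j$i) / real p \<le> x$i \<and> x$i < (real (j$i) + 1) / real p}"

definition lam :: "int^'m^'r \<Rightarrow> nat \<Rightarrow> nat^'m \<Rightarrow> real" where
  "lam L p j = real p ^ (CARD('m) - CARD('r)) * measure (muL L) (gridbox p j \<inter> kerT L)"

definition inJ :: "int^'m^'r \<Rightarrow> nat \<Rightarrow> nat^'m \<Rightarrow> bool" where
  "inJ L p j \<longleftrightarrow> (\<forall>i. j$i < p) \<and> measure (muL L) (gridbox p j \<inter> kerT L) > 0"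

end

theory Submission
  imports Defs
begin

lemma frac_borel[measurable]: "(frac :: real \<Rightarrow> real) \<in> borel_measurable borel"
proof -
  have "(frac :: real \<Rightarrow> real) = (\<lambda>x. x - real_of_int \<lfloor>x\<rfloor>)" by (rule ext) (simp add: frac_def)
  moreover have "(\<lambda>x::real. x - real_of_int \<lfloor>x\<rfloor>) \<in> borel_measurable borel"
    using borel_measurable_diff[OF measurable_ident_sets[OF refl] borel_measurable_real_floor] .
  ultimately show ?thesis by simp
qed
lemma borel_measurable_vecI:
  fixes f :: "'a \<Rightarrow> real^'n"
  assumes "\<And>i. (\<lambda>x. f x $ i) \<in> borel_measurable M"
  shows "f \<in> borel_measurable M"
proof -
  have "(\<lambda>x. f x \<bullet> b) \<in> borel_measurable M" if "b \<in> Basis" for b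
  proof -
    obtain i where "b = axis i 1" using \<open>b \<in> Basis\<close> by (auto simp: Basis_vec_def)
    then have "(\<lambda>x. f x \<bullet> b) = (\<lambda>x. f x $ i)" by (simp add: inner_axis)
    then show ?thesis using assms by simp
  qed
  then show ?thesis by (subst borel_measurable_euclidean_space) blast
qed
lemma tadd_borel: "(\<lambda>z. tadd (fst z) (snd z)) \<in> borel_measurable (borel :: ((real^'m) \<times> (real^'m)) measure)"
proof (rule borel_measurable_vecI)
  fix i
  have "(\<lambda>z::(real^'m) \<times> (real^'m). fst z $ i + snd z $ i) \<in> borel_measurable borel"
    by (intro borel_measurable_continuous_onI continuous_intros)
  then have "(\<lambda>z::(real^'m) \<times> (real^'m). frac (fst z $ i + snd z $ i)) \<in> borel_measurable borel"
    by (rule measurable_compose[OF _ frac_borel])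
  then show "(\<lambda>z. tadd (fst z) (snd z) $ i) \<in> borel_measurable borel"
    by (simp add: tadd_def)
qed


lemma det_Ints:
  fixes A :: "real^'n^'n"
  assumes "\<And>i j. A$i$j \<in> \<int>"
  shows "det A \<in> \<int>"
  unfolding det_def
  by (intro Ints_sum Ints_mult Ints_prod) (auto simp: assms sign_def)

lemma partA:
  fixes L :: "int^'m^'r"
  assumes rk: "rank (realmat L) = CARD('r)"
  shows "\<exists>(S::'m set) (E::real^'r^'m) (d::real). d \<ge> 1 \<and> d \<in> \<int> \<and> card S = CARD('r) \<and>
    (\<forall>a i. E$a$i \<in> \<int>) \<and> (\<forall>a i. a \<notin> S \<longrightarrow> E$a$i = 0) \<and>
    (\<forall>i i'. (realmat L ** E)$i$i' = (if i = i' then d else 0)) \<and>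
    (\<forall>y. (\<forall>a. a \<notin> S \<longrightarrow> y$a = 0) \<longrightarrow> realmat L *v y = 0 \<longrightarrow> y = 0)"
proof -
  define R where "R = realmat L"
  have Rint: "R$i$a \<in> \<int>" for i a by (simp add: R_def realmat_def)
  obtain B where B: "B \<subseteq> columns R" "independent B" "columns R \<subseteq> span B"
    by (rule maximal_independent_subset)
  have cardB: "card B = CARD('r)"
    using basis_card_eq_dim[OF B(1) B(3) B(2)] rk column_rank_def[of R] R_def by simp
  have finB: "finite B"
    by (rule finite_subset[OF B(1)]) (simp add: columns_def full_SetCompr_eq)
  obtain \<psi> :: "'r \<Rightarrow> real^'r" where \<psi>: "bij_betw \<psi> UNIV B"
  proof -
    have "card (UNIV::'r set) = card B" using cardB by simp
    then obtain h where "bij_betw h (UNIV::'r set) B"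
      using finB finite_same_card_bij[of "UNIV::'r set" B] by auto
    then show ?thesis using that by blast
  qed
  have "\<forall>b\<in>B. \<exists>a. column a R = b" using B(1) by (auto simp: columns_def)
  then obtain \<tau> where \<tau>: "\<And>b. b \<in> B \<Longrightarrow> column (\<tau> b) R = b" by metis
  define \<sigma> where "\<sigma> k = \<tau> (\<psi> k)" for k
  have col\<sigma>: "column (\<sigma> k) R = \<psi> k" for k
    using \<tau> \<psi> by (auto simp: \<sigma>_def bij_betw_def)
  have inj\<sigma>: "inj \<sigma>"
  proof (rule injI)
    fix k k' assume "\<sigma> k = \<sigma> k'"
    then have "\<psi> k = \<psi> k'" using col\<sigma> by metis
    then show "k = k'" using \<psi> by (auto simp: bij_betw_def inj_on_def)
  qed
  define M :: "real^'r^'r" where "M = (\<chi> i k. R$i$(\<sigma> k))"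
  have Mv: "M *v x = (\<Sum>k\<in>UNIV. x$k *\<^sub>R \<psi> k)" for x
    by (simp add: vec_eq_iff matrix_vector_mult_def M_def sum_component mult.commute
        flip: col\<sigma>) (simp add: column_def)
  have Minj: "x = 0" if "M *v x = 0" for x
  proof -
    have "(\<Sum>b\<in>B. x $ (inv_into UNIV \<psi> b) *\<^sub>R b) = (\<Sum>k\<in>UNIV. x$k *\<^sub>R \<psi> k)"
      using sum.reindex_bij_betw[OF \<psi>, of "\<lambda>b. x $ (inv_into UNIV \<psi> b) *\<^sub>R b"] \<psi>
      by (simp add: bij_betw_inv_into_left)
    also have "\<dots> = 0" using that Mv by simp
    finally have z: "(\<Sum>b\<in>B. x $ (inv_into UNIV \<psi> b) *\<^sub>R b) = 0" .
    have indep: "\<forall>c. (\<Sum>v\<in>B. c v *\<^sub>R v) = 0 \<longrightarrow> (\<forall>v\<in>B. c v = 0)"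
      using B(2) independent_explicit by blast
    have "\<forall>b\<in>B. x $ (inv_into UNIV \<psi> b) = 0"
      using indep[rule_format, OF z] by blast
    then show ?thesis using \<psi>
      by (auto simp: vec_eq_iff bij_betw_def)
  qed
  have detM: "det M \<noteq> 0"
  proof -
    have "inj ((*v) M)"
    proof (rule injI)
      fix x y assume "M *v x = M *v y"
      then have "M *v (x - y) = 0" by (simp add: matrix_vector_mult_diff_distrib)
      then show "x = y" using Minj[of "x - y"] by simp
    qed
    then show ?thesis
      by (simp add: det_eq_0_rank less_rank_noninjective)
  qed
  have Mint: "M$i$k \<in> \<int>" for i k by (simp add: M_def Rint)
  define D where "D = det M"
  have DZ: "D \<in> \<int>" unfolding D_def by (rule det_Ints) (simp add: Mint)
  define N :: "'r \<Rightarrow> real^'r" where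
    "N i = (\<chi> k. det (\<chi> a b. if b = k then axis i 1 $ a else M$a$b))" for i
  have NZ: "N i $ k \<in> \<int>" for i k
    unfolding N_def by (simp, rule det_Ints) (auto simp: Mint axis_def)
  have MN: "M *v N i = D *\<^sub>R axis i 1" for i
  proof -
    have "M *v ((1/D) *\<^sub>R N i) = axis i 1"
      using cramer[OF detM, of "(1/D) *\<^sub>R N i" "axis i 1"]
      by (simp add: N_def D_def vec_eq_iff field_simps)
    then have "D *\<^sub>R (M *v ((1/D) *\<^sub>R N i)) = D *\<^sub>R axis i 1" by simp
    then show ?thesis using detM
      by (simp add: D_def matrix_vector_mult_scaleR)
  qed
  define d where "d = \<bar>D\<bar>"
  have d1: "d \<ge> 1"
  proof -
    obtain z where z: "D = of_int z" using DZ Ints_cases by blast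
    have "z \<noteq> 0" using z detM D_def by auto
    then have "\<bar>z\<bar> \<ge> 1" by linarith
    then have "real_of_int \<bar>z\<bar> \<ge> 1" by linarith
    then show ?thesis using z d_def by simp
  qed
  define S where "S = range \<sigma>"
  define E :: "real^'r^'m" where
    "E = (\<chi> a i. if a \<in> S then sgn D * N i $ (inv \<sigma> a) else 0)"
  have EZ: "E$a$i \<in> \<int>" for a i
    using DZ NZ by (auto simp: E_def sgn_real_def)
  have E0: "a \<notin> S \<Longrightarrow> E$a$i = 0" for a i by (simp add: E_def)
  have RE: "(R ** E)$i$i' = (if i = i' then d else 0)" for i i'
  proof -
    have "(R ** E)$i$i' = (\<Sum>a\<in>S. R$i$a * E$a$i')"
      unfolding matrix_matrix_mult_def
      by (simp, rule sum.mono_neutral_right) (auto simp: E0)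
    also have "\<dots> = (\<Sum>k\<in>UNIV. R$i$(\<sigma> k) * E$(\<sigma> k)$i')"
      unfolding S_def using inj\<sigma> by (simp add: sum.reindex)
    also have "\<dots> = sgn D * (M *v N i') $ i"
      using inj\<sigma>
      by (simp add: E_def S_def matrix_vector_mult_def M_def sum_distrib_left mult_ac)
    also have "\<dots> = (if i = i' then d else 0)"
      by (simp add: MN d_def axis_def abs_sgn)
    finally show ?thesis .
  qed
  have Sinj: "y = 0" if "\<forall>a. a \<notin> S \<longrightarrow> y$a = 0" "R *v y = 0" for y
  proof -
    have "M *v (\<chi> k. y $ (\<sigma> k)) = R *v y"
    proof -
      have "(R *v y)$i = (\<Sum>k\<in>UNIV. R$i$(\<sigma> k) * y$(\<sigma> k))" for i
      proof -
        have "(R *v y)$i = (\<Sum>a\<in>S. R$i$a * y$a)"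
          unfolding matrix_vector_mult_def
          by (simp, rule sum.mono_neutral_right) (auto simp: that)
        also have "\<dots> = (\<Sum>k\<in>UNIV. R$i$(\<sigma> k) * y$(\<sigma> k))"
          unfolding S_def using inj\<sigma> by (simp add: sum.reindex)
        finally show ?thesis .
      qed
      then show ?thesis by (simp add: vec_eq_iff matrix_vector_mult_def M_def)
    qed
    then have "(\<chi> k. y $ (\<sigma> k)) = 0" using Minj that by simp
    then have "y $ a = 0" if "a \<in> S" for a using that by (auto simp: S_def vec_eq_iff)
    then show ?thesis using that by (auto simp: vec_eq_iff)
  qed
  have cS: "card S = CARD('r)" unfolding S_def using inj\<sigma> by (simp add: card_image)
  show ?thesis
    apply (rule exI[of _ S], rule exI[of _ E], rule exI[of _ d])
    using d1 DZ cS EZ E0 RE Sinj by (auto simp: R_def d_def)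
qed


lemma frac_eqI: "(a::real) - b \<in> \<int> \<Longrightarrow> frac a = frac b"
  using frac_add_int_right[of "a - b" b] by simp

lemma torus_transl:
  fixes X :: "(real^'m) set" and c :: "real^'m"
  assumes X: "X \<subseteq> torus" "X \<in> sets lebesgue" and c: "c \<in> torus"
  shows "{u \<in> torus. tadd u c \<in> X} \<in> sets lebesgue"
    and "emeasure lebesgue {u \<in> torus. tadd u c \<in> X} = emeasure lebesgue X"
proof -
  define indv :: "'m set \<Rightarrow> real^'m" where "indv I = (\<chi> i. if i \<in> I then 1 else 0)" for I
  define P where "P I = {u \<in> torus. \<forall>i. (i \<in> I \<longleftrightarrow> 1 \<le> u$i + c$i)}" for I
  define P' where "P' I = {v \<in> torus. \<forall>i. (i \<in> I \<longleftrightarrow> v$i < c$i)}" for I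
  define Y where "Y = {u \<in> torus. tadd u c \<in> X}"
  have c01: "0 \<le> c$i" "c$i < 1" for i using c by (auto simp: torus_def)
  have claim1: "Y \<inter> P I = (+) (indv I - c) ` (P' I \<inter> X)" for I
  proof (intro equalityI subsetI)
    fix u assume u: "u \<in> Y \<inter> P I"
    then have ut: "0 \<le> u$i" "u$i < 1" for i by (auto simp: Y_def P_def torus_def)
    define v where "v = tadd u c"
    have vi: "v$i = u$i + c$i - (if i \<in> I then 1 else 0)" for i
    proof (cases "i \<in> I")
      case True
      then have "1 \<le> u$i + c$i" using u by (auto simp: P_def)
      moreover have "u$i + c$i < 2" using ut[of i] c01[of i] by linarith
      ultimately have "frac (u$i + c$i) = u$i + c$i - 1"
        by (simp add: frac_unique_iff)
      then show ?thesis using True by (simp add: v_def tadd_def)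
    next
      case False
      then have "u$i + c$i < 1" using u by (auto simp: P_def)
      then have "frac (u$i + c$i) = u$i + c$i"
        using ut c01 by (simp add: frac_unique_iff)
      then show ?thesis using False by (simp add: v_def tadd_def)
    qed
    have uP: "i \<in> I \<longleftrightarrow> 1 \<le> u$i + c$i" for i using u by (auto simp: P_def)
    have "v \<in> X" using u by (auto simp: Y_def v_def)
    moreover have "v \<in> P' I"
    proof -
      have "0 \<le> v$i \<and> v$i < 1 \<and> (i \<in> I \<longleftrightarrow> v$i < c$i)" for i
      proof (cases "i \<in> I")
        case True
        then show ?thesis using vi[of i] ut[of i] c01[of i] uP[of i] by simp
      next
        case False
        then show ?thesis using vi[of i] ut[of i] c01[of i] uP[of i] by simp
      qed
      then show ?thesis by (simp add: P'_def torus_def)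
    qed
    moreover have "u = indv I - c + v" using vi by (auto simp: vec_eq_iff indv_def)
    ultimately show "u \<in> (+) (indv I - c) ` (P' I \<inter> X)" by blast
  next
    fix u assume "u \<in> (+) (indv I - c) ` (P' I \<inter> X)"
    then obtain v where v: "v \<in> P' I" "v \<in> X" and uv: "u = indv I - c + v" by blast
    have vt: "0 \<le> v$i" "v$i < 1" for i using v by (auto simp: P'_def torus_def)
    have ui: "u$i = v$i - c$i + (if i \<in> I then 1 else 0)" for i
      by (simp add: uv indv_def)
    have memI: "i \<in> I \<longleftrightarrow> v$i < c$i" for i using v by (auto simp: P'_def)
    have uti: "0 \<le> u$i \<and> u$i < 1 \<and> (i \<in> I \<longleftrightarrow> 1 \<le> u$i + c$i)" for i
    proof (cases "i \<in> I")
      case True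
      then show ?thesis using ui[of i] vt[of i] c01[of i] memI[of i] by simp
    next
      case False
      then show ?thesis using ui[of i] vt[of i] c01[of i] memI[of i] by simp
    qed
    have ut: "u \<in> torus" using uti by (simp add: torus_def)
    have "tadd u c = v"
    proof -
      have "frac (u$i + c$i) = v$i" for i
      proof -
        have "frac (u$i + c$i) = frac (v$i)"
          by (rule frac_eqI) (auto simp: ui)
        then show ?thesis using vt by (simp add: frac_eq)
      qed
      then show ?thesis by (simp add: tadd_def vec_eq_iff)
    qed
    moreover have "u \<in> P I" using ut uti by (simp add: P_def)
    ultimately show "u \<in> Y \<inter> P I" using ut v by (auto simp: Y_def)
  qed
  have Pcov: "u \<in> P {i. 1 \<le> u$i + c$i}" if "u \<in> torus" for u
    using that by (auto simp: P_def)
  have P'cov: "v \<in> P' {i. v$i < c$i}" if "v \<in> torus" for v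
    using that by (auto simp: P'_def)
  have Yeq: "Y = (\<Union>I\<in>UNIV. Y \<inter> P I)" using Pcov by (auto simp: Y_def)
  have Xeq: "X = (\<Union>I\<in>UNIV. P' I \<inter> X)" using P'cov X(1) by auto
  have disjP: "disjoint_family (\<lambda>I. Y \<inter> P I)"
    by (auto simp: disjoint_family_on_def P_def)
  have disjP': "disjoint_family (\<lambda>I. P' I \<inter> X)"
    by (auto simp: disjoint_family_on_def P'_def)
  have P'meas: "P' I \<in> sets lebesgue" for I
  proof -
    have "P' I \<in> sets borel" unfolding P'_def torus_def by measurable
    then show ?thesis by auto
  qed
  have PXmeas: "P' I \<inter> X \<in> sets lebesgue" for I using P'meas X(2) by auto
  have trmeas: "(+) (indv I - c) ` (P' I \<inter> X) \<in> sets lebesgue" for I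
    by (rule lebesgue_sets_translation[OF PXmeas])
  have trem: "emeasure lebesgue ((+) a ` S) = emeasure lebesgue S" for a and S :: "(real^'m) set"
  proof -
    have "(+) a ` S = (\<lambda>x. 1 *\<^sub>R x + a) ` S" by (auto simp: add.commute)
    then show ?thesis using emeasure_lebesgue_affine[of 1 a S] by simp
  qed
  have YPmeas: "Y \<inter> P I \<in> sets lebesgue" for I using claim1 trmeas by simp
  have Ymeas: "Y \<in> sets lebesgue"
  proof -
    have "(\<Union>I\<in>UNIV. Y \<inter> P I) \<in> sets lebesgue"
      by (rule sets.finite_UN) (auto intro: YPmeas)
    then show ?thesis using Yeq by simp
  qed
  then show "{u \<in> torus. tadd u c \<in> X} \<in> sets lebesgue" by (simp add: Y_def)
  have "emeasure lebesgue Y = (\<Sum>I\<in>UNIV. emeasure lebesgue (Y \<inter> P I))"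
  proof -
    have "(\<Sum>I\<in>UNIV. emeasure lebesgue (Y \<inter> P I)) = emeasure lebesgue (\<Union>I\<in>UNIV. Y \<inter> P I)"
      by (rule sum_emeasure) (use YPmeas disjP in auto)
    then show ?thesis using Yeq by metis
  qed
  also have "\<dots> = (\<Sum>I\<in>UNIV. emeasure lebesgue (P' I \<inter> X))"
    by (simp add: claim1 trem)
  also have "\<dots> = emeasure lebesgue X"
  proof -
    have "(\<Sum>I\<in>UNIV. emeasure lebesgue (P' I \<inter> X)) = emeasure lebesgue (\<Union>I\<in>UNIV. P' I \<inter> X)"
      by (rule sum_emeasure) (use PXmeas disjP' in auto)
    then show ?thesis using Xeq by metis
  qed
  finally show "emeasure lebesgue {u \<in> torus. tadd u c \<in> X} = emeasure lebesgue X"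
    by (simp add: Y_def)
qed


definition haarP :: "(real^'m) set \<Rightarrow> (real^'m) measure \<Rightarrow> bool" where
  "haarP K \<mu> \<longleftrightarrow> prob_space \<mu> \<and> sets \<mu> = sets (restrict_space borel K) \<and>
      (\<forall>k\<in>K. \<forall>A\<in>sets \<mu>. emeasure \<mu> {x \<in> K. tadd x k \<in> A} = emeasure \<mu> A)"

lemma haar_eq: "haar K = (THE \<mu>. haarP K \<mu>)"
  unfolding haar_def haarP_def ..

lemma tadd_comm: "tadd x y = tadd y x"
  by (simp add: tadd_def add.commute)

lemma tadd_meas_pair:
  fixes K K' :: "(real^'m) set"
  shows "(\<lambda>z. tadd (fst z) (snd z)) \<in> borel_measurable (restrict_space borel K \<Otimes>\<^sub>M restrict_space borel K')"
proof -
  have i1: "(\<lambda>x. x) \<in> measurable (restrict_space borel K) (borel :: (real^'m) measure)"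
    by (rule measurable_restrict_space1) (rule measurable_ident_sets[OF refl])
  have i2: "(\<lambda>x. x) \<in> measurable (restrict_space borel K') (borel :: (real^'m) measure)"
    by (rule measurable_restrict_space1) (rule measurable_ident_sets[OF refl])
  have "(\<lambda>z. (fst z, snd z)) \<in> measurable (restrict_space borel K \<Otimes>\<^sub>M restrict_space borel K') (borel \<Otimes>\<^sub>M borel)"
    by (rule measurable_Pair; rule measurable_compose[OF _ i1] measurable_compose[OF _ i2]) simp_all
  then have "(\<lambda>z. z) \<in> measurable (restrict_space borel K \<Otimes>\<^sub>M restrict_space borel K') (borel :: ((real^'m) \<times> (real^'m)) measure)"
    by (simp add: borel_prod)
  from measurable_compose[OF this tadd_borel] show ?thesis .
qed

lemma haar_unique:
  assumes K: "K \<in> sets borel" and \<mu>: "haarP K \<mu>" and \<nu>: "haarP K \<nu>"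
  shows "\<mu> = \<nu>"
proof -
  interpret pm: prob_space \<mu> using \<mu> by (simp add: haarP_def)
  interpret pn: prob_space \<nu> using \<nu> by (simp add: haarP_def)
  interpret ps: pair_sigma_finite \<mu> \<nu> by unfold_locales
  have sm: "sets \<mu> = sets (restrict_space borel K)" using \<mu> by (simp add: haarP_def)
  have sn: "sets \<nu> = sets (restrict_space borel K)" using \<nu> by (simp add: haarP_def)
  have spm: "space \<mu> = K" using sets_eq_imp_space_eq[OF sm] K by simp
  have spn: "space \<nu> = K" using sets_eq_imp_space_eq[OF sn] K by simp
  have im: "emeasure \<mu> {x \<in> K. tadd x k \<in> A} = emeasure \<mu> A" if "k \<in> K" "A \<in> sets \<mu>" for k A
    using \<mu> that by (simp add: haarP_def)
  have inu: "emeasure \<nu> {x \<in> K. tadd x k \<in> A} = emeasure \<nu> A" if "k \<in> K" "A \<in> sets \<nu>" for k A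
    using \<nu> that by (simp add: haarP_def)
  show ?thesis
  proof (rule measure_eqI)
    show "sets \<mu> = sets \<nu>" using sm sn by simp
    fix A assume A: "A \<in> sets \<mu>"
    have AK: "A \<subseteq> K" using sets.sets_into_space[OF A] spm by simp
    have Ab: "A \<in> sets borel" using A sm K by (simp add: sets_restrict_space_iff)
    define G where "G = (\<lambda>z. tadd (fst z) (snd z)) -` A \<inter> space (\<mu> \<Otimes>\<^sub>M \<nu>)"
    have spp: "space (\<mu> \<Otimes>\<^sub>M \<nu>) = K \<times> K" by (simp add: space_pair_measure spm spn)
    have meas: "(\<lambda>z. tadd (fst z) (snd z)) \<in> borel_measurable (\<mu> \<Otimes>\<^sub>M \<nu>)"
      using tadd_meas_pair[of K K] by (simp add: measurable_cong_sets[OF sets_pair_measure_cong[OF sm sn] refl])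
    have G: "G \<in> sets (\<mu> \<Otimes>\<^sub>M \<nu>)" unfolding G_def by (rule measurable_sets[OF meas Ab])
    have "emeasure (\<mu> \<Otimes>\<^sub>M \<nu>) G = (\<integral>\<^sup>+x. emeasure \<nu> (Pair x -` G) \<partial>\<mu>)"
      by (rule pn.emeasure_pair_measure_alt[OF G])
    also have "\<dots> = (\<integral>\<^sup>+x. emeasure \<nu> A \<partial>\<mu>)"
    proof (rule nn_integral_cong)
      fix x assume x: "x \<in> space \<mu>"
      then have "Pair x -` G = {y \<in> K. tadd y x \<in> A}"
        using spm by (auto simp: G_def spp tadd_comm)
      then show "emeasure \<nu> (Pair x -` G) = emeasure \<nu> A"
        using inu[of x A] x spm A sm sn by simp
    qed
    also have "\<dots> = emeasure \<nu> A" by (simp add: pm.emeasure_space_1)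
    finally have 1: "emeasure (\<mu> \<Otimes>\<^sub>M \<nu>) G = emeasure \<nu> A" .
    have "emeasure (\<mu> \<Otimes>\<^sub>M \<nu>) G = (\<integral>\<^sup>+y. emeasure \<mu> ((\<lambda>x. (x, y)) -` G) \<partial>\<nu>)"
      by (rule ps.emeasure_pair_measure_alt2[OF G])
    also have "\<dots> = (\<integral>\<^sup>+y. emeasure \<mu> A \<partial>\<nu>)"
    proof (rule nn_integral_cong)
      fix y assume y: "y \<in> space \<nu>"
      then have "(\<lambda>x. (x, y)) -` G = {x \<in> K. tadd x y \<in> A}"
        using spn by (auto simp: G_def spp)
      then show "emeasure \<mu> ((\<lambda>x. (x, y)) -` G) = emeasure \<mu> A"
        using im[of y A] y spn A by simp
    qed
    also have "\<dots> = emeasure \<mu> A" by (simp add: pn.emeasure_space_1)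
    finally show "emeasure \<mu> A = emeasure \<nu> A" using 1 by simp
  qed
qed

lemma haar_is:
  assumes K: "K \<in> sets borel" and \<nu>: "haarP K \<nu>"
  shows "haar K = \<nu>"
  unfolding haar_eq
proof (rule the_equality)
  show "haarP K \<nu>" by (rule \<nu>)
  fix \<mu> assume "haarP K \<mu>"
  then show "\<mu> = \<nu>" by (rule haar_unique[OF K _ \<nu>])
qed


lemma fin_vecs: "finite V \<Longrightarrow> finite {x::'a^'n. \<forall>i. x$i \<in> V}"
proof -
  assume V: "finite V"
  have "{x::'a^'n. \<forall>i. x$i \<in> V} \<subseteq> vec_lambda ` (PiE UNIV (\<lambda>_. V))"
  proof
    fix x :: "'a^'n" assume "x \<in> {x. \<forall>i. x$i \<in> V}"
    then have "(\<lambda>i. x$i) \<in> PiE UNIV (\<lambda>_. V)" by auto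
    then show "x \<in> vec_lambda ` (PiE UNIV (\<lambda>_. V))" by (metis image_eqI vec_lambda_eta)
  qed
  moreover have "finite (vec_lambda ` (PiE UNIV (\<lambda>_. V)) :: ('a^'n) set)"
    using V by (intro finite_imageI finite_PiE) auto
  ultimately show ?thesis by (rule finite_subset)
qed

lemma torus_borel[measurable]: "torus \<in> sets (borel :: (real^'m) measure)"
  unfolding torus_def by measurable

lemma torus_leb: "torus \<in> sets (lebesgue :: (real^'m) measure)"
  using torus_borel by auto

lemma torus_emeasure: "emeasure lebesgue (torus :: (real^'m) set) = 1"
proof -
  define c1 :: "real^'m" where "c1 = (\<chi> i. 1)"
  have c1b: "c1 \<bullet> b = 1" if "b \<in> Basis" for b
    using that by (auto simp: Basis_vec_def inner_axis c1_def)
  have zb: "(0::real^'m) \<bullet> b \<le> c1 \<bullet> b" if "b \<in> Basis" for b using c1b[OF that] by simp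
  have sub1: "box 0 c1 \<subseteq> (torus :: (real^'m) set)"
  proof
    fix x :: "real^'m" assume "x \<in> box 0 c1"
    then have h: "0 < x$i" "x$i < 1" for i by (simp_all add: mem_box_cart c1_def)
    show "x \<in> torus" unfolding torus_def using h less_imp_le by blast
  qed
  have sub2: "(torus :: (real^'m) set) \<subseteq> cbox 0 c1"
  proof
    fix x :: "real^'m" assume "x \<in> torus"
    then have h: "0 \<le> x$i" "x$i < 1" for i by (simp_all add: torus_def)
    show "x \<in> cbox 0 c1" unfolding mem_box_cart c1_def using h(1) h(2)[THEN less_imp_le] by simp
  qed
  have pr: "(\<Prod>b\<in>Basis. (c1 - 0) \<bullet> b) = (1::real)"
    by (rule prod.neutral) (simp add: c1b)
  have b1: "emeasure lborel (box 0 c1) = 1"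
    using zb pr by (simp add: emeasure_lborel_box_eq)
  have b2: "emeasure lborel (cbox 0 c1) = 1"
    using zb pr by (simp add: emeasure_lborel_cbox_eq)
  have "emeasure lborel (torus :: (real^'m) set) = 1"
    using emeasure_mono[OF sub1, of lborel] emeasure_mono[OF sub2, of lborel] b1 b2
    by (simp add: antisym)
  then show ?thesis by simp
qed

lemma frac_diff_Ints: "frac (a::real) - a \<in> \<int>"
proof -
  have "frac a - a = - of_int \<lfloor>a\<rfloor>" using frac_def[of a] by simp
  then show ?thesis by (metis Ints_minus Ints_of_int)
qed

lemma frac_frac_add: "frac (frac (a::real) + frac b) = frac (a + b)"
proof (rule frac_eqI)
  have "frac a + frac b - (a + b) = (frac a - a) + (frac b - b)" by simp
  then show "frac a + frac b - (a + b) \<in> \<int>" using Ints_add[OF frac_diff_Ints[of a] frac_diff_Ints[of b]] by metis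
qed

lemma tadd_torus: "tadd x y \<in> torus"
  by (simp add: tadd_def torus_def frac_lt_1)

lemma kerT_borel: "kerT L \<in> sets (borel :: (real^'m) measure)"
proof -
  have m: "(\<lambda>x. (realmat L *v x) $ i) \<in> borel_measurable (borel :: (real^'m) measure)" for i
    by (intro borel_measurable_continuous_onI continuous_intros)
  have s: "{x::real^'m. (realmat L *v x) $ i \<in> \<int>} \<in> sets borel" for i
  proof -
    have "(\<lambda>x. (realmat L *v x) $ i) -` \<int> \<inter> space borel \<in> sets (borel :: (real^'m) measure)"
      by (rule measurable_sets[OF m borel_closed[OF closed_Ints]])
    then show ?thesis by (simp add: vimage_def)
  qed
  have "kerT L = torus \<inter> (\<Inter>i. {x::real^'m. (realmat L *v x) $ i \<in> \<int>})"
    by (auto simp: kerT_def)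
  then show ?thesis using torus_borel s by auto
qed



definition fr :: "real^'m \<Rightarrow> real^'m" where "fr x = (\<chi> a. frac (x$a))"

lemma fr_eqI: "(\<And>a. x$a - y$a \<in> \<int>) \<Longrightarrow> fr x = fr y"
  by (simp add: fr_def vec_eq_iff frac_eqI)

lemma tadd_fr: "tadd x y = fr (x + y)"
  by (simp add: tadd_def fr_def)

lemma fr_torus: "fr x \<in> torus"
  by (simp add: fr_def torus_def frac_lt_1)

lemma fr_diff_Ints: "fr x $ a - x $ a \<in> \<int>"
  by (simp add: fr_def frac_diff_Ints)

lemma fr_id: "x \<in> torus \<Longrightarrow> fr x = x"
  by (simp add: fr_def torus_def vec_eq_iff frac_eq)

lemma mv_Ints: "(\<And>a b. A$a$b \<in> \<int>) \<Longrightarrow> (\<And>b. x$b \<in> \<int>) \<Longrightarrow> (A *v x)$a \<in> \<int>"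
  by (simp add: matrix_vector_mult_def Ints_sum Ints_mult)

lemma sum_if_eq:
  fixes f :: "'n::finite \<Rightarrow> real"
  shows "(\<Sum>j\<in>UNIV. (if i = j then c else 0) * f j) = (c::real) * f i"
proof -
  have "(\<Sum>j\<in>UNIV. (if i = j then c else 0) * f j) = (\<Sum>j\<in>UNIV. if j = i then c * f i else 0)"
    by (rule sum.cong) auto
  also have "\<dots> = c * f i" by (simp add: sum.delta')
  finally show ?thesis .
qed

locale cfg =
  fixes L :: "int^'m^'r" and S :: "'m set" and E :: "real^'r^'m" and d :: real
  assumes d1: "d \<ge> 1" and dZ: "d \<in> \<int>" and cS: "card S = CARD('r)"
   and EZ: "\<And>a i. E$a$i \<in> \<int>" and E0: "\<And>a i. a \<notin> S \<Longrightarrow> E$a$i = 0"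
   and RE: "\<And>i i'. (realmat L ** E)$i$i' = (if i = i' then d else 0)"
   and Sinj: "\<And>y. (\<forall>a. a \<notin> S \<longrightarrow> y$a = 0) \<Longrightarrow> realmat L *v y = 0 \<Longrightarrow> y = 0"
begin

abbreviation "R \<equiv> realmat L"

definition Q :: "real^'m^'m" where "Q = (\<chi> a b. (if a = b then d else 0) - (E ** R)$a$b)"

lemma RZ: "R$i$a \<in> \<int>" by (simp add: realmat_def)

lemma QZ: "Q$a$b \<in> \<int>"
  unfolding Q_def matrix_matrix_mult_def using dZ EZ RZ
  by (simp add: Ints_sum Ints_mult Ints_diff)

lemma REz: "R *v (E *v z) = d *\<^sub>R z"
proof -
  have "R *v (E *v z) = (R ** E) *v z" by (simp add: matrix_vector_mul_assoc)
  also have "\<dots> = d *\<^sub>R z"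
  proof -
    have "((R ** E) *v z) $ i = d * z $ i" for i
    proof -
      have "((R ** E) *v z) $ i = (\<Sum>j\<in>UNIV. (if i = j then d else 0) * z$j)"
        by (simp add: matrix_vector_mult_def RE)
      also have "\<dots> = d * z$i" by (rule sum_if_eq)
      finally show ?thesis .
    qed
    then show ?thesis by (simp add: vec_eq_iff)
  qed
  finally show ?thesis .
qed

lemma Qv: "Q *v u = d *\<^sub>R u - E *v (R *v u)"
proof -
  have "(Q *v u)$a = d * u$a - (E *v (R *v u))$a" for a
  proof -
    have "(Q *v u)$a = (\<Sum>b\<in>UNIV. (if a = b then d else 0) * u$b) - (\<Sum>b\<in>UNIV. (E ** R)$a$b * u$b)"
      by (simp add: Q_def matrix_vector_mult_def left_diff_distrib sum_subtractf)
    also have "(\<Sum>b\<in>UNIV. (if a = b then d else 0) * u$b) = d * u$a"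
      by (rule sum_if_eq)
    also have "(\<Sum>b\<in>UNIV. (E ** R)$a$b * u$b) = ((E ** R) *v u)$a"
      by (simp add: matrix_vector_mult_def)
    finally show ?thesis by (simp add: matrix_vector_mul_assoc)
  qed
  then show ?thesis by (simp add: vec_eq_iff)
qed

lemma RQ: "R *v (Q *v u) = 0"
  by (simp add: Qv matrix_vector_mult_diff_distrib REz matrix_vector_mult_scaleR)

lemma Qt: "a \<notin> S \<Longrightarrow> (Q *v u)$a = d * u$a"
  unfolding Qv by (simp add: matrix_vector_mult_def E0)

lemma Qs: "b \<in> S \<Longrightarrow> Q$a$b = 0"
proof -
  assume b: "b \<in> S"
  define y where "y = Q *v axis b 1"
  have ya: "y$a = Q$a$b" for a
    by (simp add: y_def matrix_vector_mult_basis column_def)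
  have "\<forall>a. a \<notin> S \<longrightarrow> y$a = 0"
    using b by (auto simp: y_def Qt axis_def)
  moreover have "R *v y = 0" by (simp add: y_def RQ)
  ultimately have "y = 0" by (rule Sinj)
  then show ?thesis using ya by simp
qed

lemma Qv_T: "Q *v u = Q *v (\<chi> a. if a \<in> S then 0 else u$a)"
  by (auto simp: matrix_vector_mult_def vec_eq_iff Qs intro!: sum.cong)

end


definition intv :: "real^'m \<Rightarrow> bool" where "intv x \<longleftrightarrow> (\<forall>a. x$a \<in> \<int>)"

lemma intv_add: "intv x \<Longrightarrow> intv y \<Longrightarrow> intv (x + y)" by (simp add: intv_def)
lemma intv_diff: "intv x \<Longrightarrow> intv y \<Longrightarrow> intv (x - y)" by (simp add: intv_def)
lemma intv_fr: "intv (fr x - x)" by (simp add: intv_def fr_diff_Ints)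
lemma intv_0: "intv 0" by (simp add: intv_def)
lemma intv_mv: "(\<And>a b. A$a$b \<in> \<int>) \<Longrightarrow> intv x \<Longrightarrow> intv (A *v x)"
  unfolding intv_def by (intro allI mv_Ints) auto
lemma fr_eqI': "intv (x - y) \<Longrightarrow> fr x = fr y"
  by (rule fr_eqI) (simp add: intv_def)

lemma Ints_abs_lt1: "(x::real) \<in> \<int> \<Longrightarrow> \<bar>x\<bar> < 1 \<Longrightarrow> x = 0"
proof -
  assume x: "x \<in> \<int>" and a: "\<bar>x\<bar> < 1"
  obtain k where k: "x = of_int k" using x by (auto elim: Ints_cases)
  then have "\<bar>k\<bar> < 1" using a by linarith
  then have "k = 0" by simp
  then show ?thesis using k by simp
qed

lemma frac_eq_Ints: "frac (x::real) = frac y \<Longrightarrow> x - y \<in> \<int>"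
proof -
  assume "frac x = frac y"
  then have "x - y = (x - frac x) - (y - frac y)" by simp
  moreover have "x - frac x \<in> \<int>" "y - frac y \<in> \<int>"
    using frac_diff_Ints[of x] frac_diff_Ints[of y] by (metis Ints_minus minus_diff_eq)+
  ultimately show ?thesis by (metis Ints_diff)
qed

context cfg begin

definition F :: "(real^'m) set" where "F = {fr ((1/d) *\<^sub>R (E *v z)) | z. \<forall>i. z$i \<in> \<int>}"

definition g :: "(real^'m) \<times> (real^'m) \<Rightarrow> real^'m" where "g z = tadd (fst z) (Q *v snd z)"

abbreviation "K \<equiv> kerT L"

lemma RintvZ: "intv x \<Longrightarrow> (R *v x)$i \<in> \<int>"
  using mv_Ints[of R x i] RZ by (simp add: intv_def)

lemma F_torus: "f \<in> F \<Longrightarrow> f \<in> torus" by (auto simp: F_def fr_torus)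

lemma F_T: "f \<in> F \<Longrightarrow> a \<notin> S \<Longrightarrow> f$a = 0"
  by (auto simp: F_def fr_def matrix_vector_mult_def E0)

lemma F_intv: "f \<in> F \<Longrightarrow> \<exists>z. (\<forall>i. z$i \<in> \<int>) \<and> intv (f - (1/d) *\<^sub>R (E *v z))"
  by (auto simp: F_def intv_fr)

lemma EzZ: "(\<forall>i. z$i \<in> \<int>) \<Longrightarrow> (E *v z)$a \<in> \<int>"
  using mv_Ints[of E z a] EZ by simp

lemma F_dZ: "f \<in> F \<Longrightarrow> d * f$a \<in> \<int>"
proof -
  assume "f \<in> F"
  then obtain z where z: "\<forall>i. z$i \<in> \<int>" "intv (f - (1/d) *\<^sub>R (E *v z))" using F_intv by blast
  have "d * f$a = d * (f$a - (1/d) * (E *v z)$a) + (E *v z)$a"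
    using d1 by (simp add: field_simps)
  moreover have "f$a - (1/d) * (E *v z)$a \<in> \<int>" using z(2) by (simp add: intv_def)
  ultimately show ?thesis using dZ EzZ[OF z(1)] by (metis Ints_add Ints_mult)
qed

lemma F_RZ: "f \<in> F \<Longrightarrow> (R *v f)$i \<in> \<int>"
proof -
  assume "f \<in> F"
  then obtain z where z: "\<forall>i. z$i \<in> \<int>" "intv (f - (1/d) *\<^sub>R (E *v z))" using F_intv by blast
  have "R *v f = R *v (f - (1/d) *\<^sub>R (E *v z)) + (1/d) *\<^sub>R (R *v (E *v z))"
    by (simp add: matrix_vector_mult_diff_distrib matrix_vector_mult_scaleR)
  also have "(1/d) *\<^sub>R (R *v (E *v z)) = z" using d1 by (simp add: REz)
  finally show ?thesis using RintvZ[OF z(2), of i] z(1) by simp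
qed

lemma F_0: "0 \<in> F"
proof -
  have "fr ((1/d) *\<^sub>R (E *v 0)) = 0" by (simp add: fr_def vec_eq_iff)
  then show ?thesis unfolding F_def by (intro CollectI exI[of _ 0]) simp
qed

lemma F_fin: "finite F"
proof -
  define V where "V = (\<lambda>k::int. real_of_int k / d) ` {0..<\<lfloor>d\<rfloor>}"
  have "F \<subseteq> {x. \<forall>a. x$a \<in> V}"
  proof (intro subsetI CollectI allI)
    fix f a assume f: "f \<in> F"
    obtain k where k: "d * f$a = of_int k" using F_dZ[OF f, of a] by (auto elim: Ints_cases)
    have fa: "0 \<le> f$a" "f$a < 1" using F_torus[OF f] by (auto simp: torus_def)
    have "0 \<le> d * f$a" using fa d1 by simp
    then have "0 \<le> real_of_int k" using k by simp
    then have k0: "0 \<le> k" by simp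
    have "d * f$a < d * 1" using fa d1 by (intro mult_strict_left_mono) auto
    then have "real_of_int k < d" using k by simp
    moreover have "d = of_int \<lfloor>d\<rfloor>" using dZ by (auto elim: Ints_cases)
    ultimately have "k < \<lfloor>d\<rfloor>" by linarith
    moreover have "f$a = real_of_int k / d" using k d1 by (simp add: field_simps)
    ultimately show "f$a \<in> V" unfolding V_def using k0 by auto
  qed
  moreover have "finite {x::real^'m. \<forall>a. x$a \<in> V}" by (rule fin_vecs) (simp add: V_def)
  ultimately show ?thesis by (rule finite_subset)
qed

lemma F_add: "f \<in> F \<Longrightarrow> f0 \<in> F \<Longrightarrow> tadd f f0 \<in> F"
proof -
  assume f: "f \<in> F" and f0: "f0 \<in> F"
  obtain z where z: "\<forall>i. z$i \<in> \<int>" "intv (f - (1/d) *\<^sub>R (E *v z))" using F_intv[OF f] by blast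
  obtain z0 where z0: "\<forall>i. z0$i \<in> \<int>" "intv (f0 - (1/d) *\<^sub>R (E *v z0))" using F_intv[OF f0] by blast
  have "tadd f f0 = fr (f + f0)" by (simp add: tadd_fr)
  also have "\<dots> = fr ((1/d) *\<^sub>R (E *v (z + z0)))"
  proof (rule fr_eqI')
    have eq: "f + f0 - (1/d) *\<^sub>R (E *v (z + z0)) = (f - (1/d) *\<^sub>R (E *v z)) + (f0 - (1/d) *\<^sub>R (E *v z0))"
      by (simp add: matrix_vector_right_distrib algebra_simps)
    show "intv (f + f0 - (1/d) *\<^sub>R (E *v (z + z0)))" unfolding eq by (rule intv_add[OF z(2) z0(2)])
  qed
  moreover have "\<forall>i. (z + z0)$i \<in> \<int>" using z(1) z0(1) by simp
  ultimately show ?thesis unfolding F_def by (intro CollectI exI[of _ "z + z0"]) simp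
qed

lemma tadd_cancel: "x \<in> torus \<Longrightarrow> y \<in> torus \<Longrightarrow> tadd x c = tadd y c \<Longrightarrow> x = y"
proof -
  assume x: "x \<in> torus" and y: "y \<in> torus" and e: "tadd x c = tadd y c"
  have "x$a = y$a" for a
  proof -
    have "frac (x$a + c$a) = frac (y$a + c$a)" using e by (simp add: tadd_def vec_eq_iff)
    then have "x$a - y$a \<in> \<int>" using frac_eq_Ints by fastforce
    moreover have "\<bar>x$a - y$a\<bar> < 1"
    proof -
      have "0 \<le> x$a" "x$a < 1" "0 \<le> y$a" "y$a < 1" using x y by (simp_all add: torus_def)
      then show ?thesis by (simp add: abs_diff_less_iff)
    qed
    ultimately show ?thesis using Ints_abs_lt1 by fastforce
  qed
  then show ?thesis by (simp add: vec_eq_iff)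
qed

lemma F_bij: "f0 \<in> F \<Longrightarrow> bij_betw (\<lambda>f. tadd f f0) F F"
proof -
  assume f0: "f0 \<in> F"
  have inj: "inj_on (\<lambda>f. tadd f f0) F"
    by (rule inj_onI) (use F_torus tadd_cancel in blast)
  have sub: "(\<lambda>f. tadd f f0) ` F \<subseteq> F" using F_add f0 by auto
  have "card ((\<lambda>f. tadd f f0) ` F) = card F" using card_image[OF inj] .
  then have "(\<lambda>f. tadd f f0) ` F = F" using card_subset_eq[OF F_fin sub] by simp
  then show ?thesis using inj by (simp add: bij_betw_def)
qed

lemma g_K: "fst z \<in> F \<Longrightarrow> g z \<in> K"
proof -
  assume f: "fst z \<in> F"
  have "g z = fr (fst z + Q *v snd z)" by (simp add: g_def tadd_fr)
  moreover have "(R *v fr (fst z + Q *v snd z))$i \<in> \<int>" for i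
  proof -
    have "R *v fr (fst z + Q *v snd z) = R *v (fr (fst z + Q *v snd z) - (fst z + Q *v snd z)) + R *v fst z"
      by (simp add: matrix_vector_mult_diff_distrib matrix_vector_right_distrib RQ)
    then show ?thesis using RintvZ[OF intv_fr, of _ i] F_RZ[OF f, of i] by (metis Ints_add vector_add_component)
  qed
  ultimately show ?thesis by (simp add: kerT_def fr_torus)
qed

lemma g_tadd: "tadd (g (f, u)) (g (f0, u0)) = g (tadd f f0, tadd u u0)"
proof -
  have "tadd (g (f, u)) (g (f0, u0)) = fr (fr (f + Q *v u) + fr (f0 + Q *v u0))"
    by (simp add: g_def tadd_fr)
  also have "\<dots> = fr (f + f0 + Q *v u + Q *v u0)"
  proof (rule fr_eqI')
    have eq: "fr (f + Q *v u) + fr (f0 + Q *v u0) - (f + f0 + Q *v u + Q *v u0)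
       = (fr (f + Q *v u) - (f + Q *v u)) + (fr (f0 + Q *v u0) - (f0 + Q *v u0))" by simp
    show "intv (fr (f + Q *v u) + fr (f0 + Q *v u0) - (f + f0 + Q *v u + Q *v u0))"
      unfolding eq by (rule intv_add[OF intv_fr intv_fr])
  qed
  also have "\<dots> = fr (fr (f + f0) + Q *v fr (u + u0))"
  proof (rule fr_eqI')
    have "f + f0 + Q *v u + Q *v u0 - (fr (f + f0) + Q *v fr (u + u0))
       = - ((fr (f + f0) - (f + f0)) + Q *v (fr (u + u0) - (u + u0)))"
      by (simp add: matrix_vector_mult_diff_distrib matrix_vector_right_distrib algebra_simps)
    moreover have "intv ((fr (f + f0) - (f + f0)) + Q *v (fr (u + u0) - (u + u0)))"
      by (intro intv_add intv_fr intv_mv QZ)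
    ultimately show "intv (f + f0 + Q *v u + Q *v u0 - (fr (f + f0) + Q *v fr (u + u0)))"
      by (metis intv_diff intv_0 diff_0)
  qed
  also have "\<dots> = g (tadd f f0, tadd u u0)" by (simp add: g_def tadd_fr)
  finally show ?thesis .
qed

lemma g_surj: "k \<in> K \<Longrightarrow> \<exists>f0\<in>F. \<exists>u0\<in>torus. g (f0, u0) = k"
proof -
  assume k: "k \<in> K"
  define z where "z = R *v k"
  have zZ: "\<forall>i. z$i \<in> \<int>" using k by (simp add: kerT_def z_def)
  define f0 where "f0 = fr ((1/d) *\<^sub>R (E *v z))"
  define u0 where "u0 = (1/d) *\<^sub>R k"
  have f0F: "f0 \<in> F" unfolding F_def f0_def using zZ by blast
  have kt: "k \<in> torus" using k by (simp add: kerT_def)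
  have u0t: "u0 \<in> torus"
  proof -
    have "0 \<le> k$a / d \<and> k$a / d < 1" for a
      using kt d1 by (auto simp: torus_def divide_less_eq intro: order_less_le_trans)
    then show ?thesis by (simp add: u0_def torus_def)
  qed
  have "g (f0, u0) = fr (f0 + Q *v u0)" by (simp add: g_def tadd_fr)
  also have "\<dots> = fr k"
  proof (rule fr_eqI')
    have "Q *v u0 = k - (1/d) *\<^sub>R (E *v z)"
      using d1 by (simp add: u0_def Qv z_def matrix_vector_mult_scaleR algebra_simps)
    then have "f0 + Q *v u0 - k = fr ((1/d) *\<^sub>R (E *v z)) - (1/d) *\<^sub>R (E *v z)"
      by (simp add: f0_def)
    then show "intv (f0 + Q *v u0 - k)" by (simp add: intv_fr)
  qed
  also have "\<dots> = k" using kt by (rule fr_id)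
  finally show ?thesis using f0F u0t by blast
qed

end


abbreviation "Tor \<equiv> restrict_space lebesgue (torus :: (real^'m) set)"

lemma space_Tor: "space Tor = torus" using torus_leb by simp

lemma prob_Tor: "prob_space Tor"
proof
  show "emeasure Tor (space Tor) = 1"
    using torus_leb torus_emeasure by (simp add: emeasure_restrict_space)
qed

lemma sets_Tor_iff: "X \<in> sets Tor \<longleftrightarrow> X \<subseteq> torus \<and> X \<in> sets lebesgue"
  using torus_leb by (simp add: sets_restrict_space_iff)

lemma emeasure_Tor: "X \<subseteq> torus \<Longrightarrow> emeasure Tor X = emeasure lebesgue X"
  using torus_leb by (simp add: emeasure_restrict_space)

lemma borel_to_leb: "f \<in> borel_measurable borel \<Longrightarrow> f \<in> borel_measurable (lebesgue :: ('a::euclidean_space) measure)"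
proof -
  assume "f \<in> borel_measurable borel"
  then have "f \<in> borel_measurable lborel" by (simp add: measurable_lborel1)
  then show ?thesis by (rule measurable_completion)
qed

context cfg begin

definition M :: "((real^'m) \<times> (real^'m)) measure" where
  "M = uniform_count_measure F \<Otimes>\<^sub>M Tor"

definition nu :: "(real^'m) measure" where
  "nu = distr M (restrict_space borel K) g"

lemma F_ne: "F \<noteq> {}" using F_0 by auto

lemma prob_M: "prob_space M"
  unfolding M_def
  by (rule prob_space_pair[OF prob_space_uniform_count_measure[OF F_fin F_ne] prob_Tor])

lemma space_M: "space M = F \<times> torus"
  by (simp add: M_def space_pair_measure space_uniform_count_measure space_Tor)

lemma sets_M: "sets M = sets (count_space F \<Otimes>\<^sub>M Tor)"
  unfolding M_def by (rule sets_pair_measure_cong[OF sets_uniform_count_measure_count_space refl])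

lemma gf_meas: "(\<lambda>u. g (f, u)) \<in> borel_measurable Tor"
proof -
  have "(\<lambda>u::real^'m. (f, Q *v u)) \<in> borel_measurable borel"
    by (intro borel_measurable_continuous_onI continuous_intros)
  then have "(\<lambda>u. tadd (fst (f, Q *v u)) (snd (f, Q *v u))) \<in> borel_measurable (borel :: (real^'m) measure)"
    by (rule measurable_compose[OF _ tadd_borel])
  then have "(\<lambda>u. g (f, u)) \<in> borel_measurable (borel :: (real^'m) measure)"
    by (simp add: g_def)
  then show ?thesis by (intro measurable_restrict_space1 borel_to_leb)
qed

lemma g_meas_borel: "g \<in> borel_measurable M"
proof -
  have "g \<in> borel_measurable (count_space F \<Otimes>\<^sub>M Tor)"
    by (rule measurable_pair_measure_countable1) (auto intro: countable_finite F_fin gf_meas)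
  then show ?thesis by (simp add: measurable_cong_sets[OF sets_M refl])
qed

lemma g_meas: "g \<in> measurable M (restrict_space borel K)"
  by (rule measurable_restrict_space2) (auto simp: space_M g_K g_meas_borel)

lemma sets_nu: "sets nu = sets (restrict_space borel K)"
  by (simp add: nu_def)

lemma prob_nu: "prob_space nu"
  unfolding nu_def by (rule prob_space.prob_space_distr[OF prob_M g_meas])

lemma emeasure_nu: "A \<in> sets (restrict_space borel K) \<Longrightarrow> emeasure nu A = emeasure M (g -` A \<inter> space M)"
  unfolding nu_def by (rule emeasure_distr[OF g_meas])

lemma emM: "Z \<in> sets M \<Longrightarrow> emeasure M Z = (\<Sum>f\<in>F. ennreal (1 / real (card F)) * emeasure lebesgue (Pair f -` Z))"
proof -
  assume Z: "Z \<in> sets M"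
  interpret T: prob_space Tor by (rule prob_Tor)
  have "emeasure M Z = (\<integral>\<^sup>+f. emeasure Tor (Pair f -` Z) \<partial>uniform_count_measure F)"
    unfolding M_def by (rule T.emeasure_pair_measure_alt) (use Z M_def in simp)
  also have "\<dots> = (\<Sum>f\<in>F. ennreal (1 / real (card F)) * emeasure Tor (Pair f -` Z))"
    unfolding uniform_count_measure_def using F_fin by (simp add: nn_integral_point_measure_finite)
  also have "\<dots> = (\<Sum>f\<in>F. ennreal (1 / real (card F)) * emeasure lebesgue (Pair f -` Z))"
  proof (rule sum.cong[OF refl])
    fix f assume "f \<in> F"
    have "Pair f -` Z \<subseteq> torus" using sets.sets_into_space[OF Z] by (auto simp: space_M)
    then show "ennreal (1 / real (card F)) * emeasure Tor (Pair f -` Z) = ennreal (1 / real (card F)) * emeasure lebesgue (Pair f -` Z)"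
      by (simp add: emeasure_Tor)
  qed
  finally show ?thesis .
qed

end


context cfg begin

lemma K_borel: "K \<in> sets borel" by (rule kerT_borel)

lemma tadd_k_meas: "(\<lambda>x. tadd x k) \<in> borel_measurable (borel :: (real^'m) measure)"
proof -
  have "(\<lambda>x::real^'m. (x, k)) \<in> borel_measurable borel"
    by (intro borel_measurable_continuous_onI continuous_intros)
  from measurable_compose[OF this tadd_borel] show ?thesis by simp
qed

lemma Pair_sets: "Z \<in> sets M \<Longrightarrow> Pair f -` Z \<in> sets Tor"
  unfolding M_def by (rule sets_Pair1)

lemma nu_inv:
  assumes k: "k \<in> K" and A: "A \<in> sets nu"
  shows "emeasure nu {x \<in> K. tadd x k \<in> A} = emeasure nu A"
proof -
  have AsK: "A \<in> sets (restrict_space borel K)" using A sets_nu by simp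
  have Ab: "A \<in> sets borel" "A \<subseteq> K" using AsK K_borel by (simp_all add: sets_restrict_space_iff)
  define A' where "A' = {x \<in> K. tadd x k \<in> A}"
  have "(\<lambda>x. tadd x k) -` A \<inter> space borel \<in> sets (borel :: (real^'m) measure)"
    by (rule measurable_sets[OF tadd_k_meas Ab(1)])
  then have "A' \<in> sets borel" using K_borel unfolding A'_def by (auto simp: vimage_def Collect_conj_eq Int_commute)
  then have A'sK: "A' \<in> sets (restrict_space borel K)" using K_borel by (simp add: sets_restrict_space_iff A'_def)
  obtain f0 u0 where f0: "f0 \<in> F" and u0: "u0 \<in> torus" and gk: "g (f0, u0) = k" using g_surj[OF k] by blast
  define Z where "Z = g -` A \<inter> space M"
  define Z' where "Z' = g -` A' \<inter> space M"
  have Z: "Z \<in> sets M" unfolding Z_def by (rule measurable_sets[OF g_meas AsK])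
  have Z': "Z' \<in> sets M" unfolding Z'_def by (rule measurable_sets[OF g_meas A'sK])
  have slZ: "Pair f -` Z = {u \<in> torus. g (f, u) \<in> A}" if "f \<in> F" for f
    using that by (auto simp: Z_def space_M)
  have slZ': "Pair f -` Z' = {u \<in> torus. tadd u u0 \<in> Pair (tadd f f0) -` Z}" if f: "f \<in> F" for f
  proof -
    have "Pair f -` Z' = {u \<in> torus. g (tadd f f0, tadd u u0) \<in> A}"
      using f g_K[of "(f, _)"] by (auto simp: Z'_def A'_def space_M simp flip: gk g_tadd)
    also have "\<dots> = {u \<in> torus. tadd u u0 \<in> Pair (tadd f f0) -` Z}"
      using slZ[OF F_add[OF f f0]] tadd_torus by auto
    finally show ?thesis .
  qed
  have "emeasure nu A' = emeasure M Z'" unfolding Z'_def by (rule emeasure_nu[OF A'sK])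
  also have "\<dots> = (\<Sum>f\<in>F. ennreal (1 / real (card F)) * emeasure lebesgue (Pair f -` Z'))"
    by (rule emM[OF Z'])
  also have "\<dots> = (\<Sum>f\<in>F. ennreal (1 / real (card F)) * emeasure lebesgue (Pair (tadd f f0) -` Z))"
  proof (rule sum.cong[OF refl])
    fix f assume f: "f \<in> F"
    have X: "Pair (tadd f f0) -` Z \<subseteq> torus" "Pair (tadd f f0) -` Z \<in> sets lebesgue"
      using Pair_sets[OF Z, of "tadd f f0"] by (simp_all add: sets_Tor_iff)
    show "ennreal (1 / real (card F)) * emeasure lebesgue (Pair f -` Z') =
          ennreal (1 / real (card F)) * emeasure lebesgue (Pair (tadd f f0) -` Z)"
      using torus_transl(2)[OF X u0] slZ'[OF f] by simp
  qed
  also have "\<dots> = (\<Sum>f\<in>F. ennreal (1 / real (card F)) * emeasure lebesgue (Pair f -` Z))"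
    using sum.reindex_bij_betw[OF F_bij[OF f0], of "\<lambda>f'. ennreal (1 / real (card F)) * emeasure lebesgue (Pair f' -` Z)"] .
  also have "\<dots> = emeasure M Z" by (rule emM[OF Z, symmetric])
  also have "\<dots> = emeasure nu A" unfolding Z_def by (rule emeasure_nu[OF AsK, symmetric])
  finally show ?thesis by (simp add: A'_def)
qed

lemma nu_haarP: "haarP K nu"
  unfolding haarP_def using prob_nu sets_nu nu_inv by blast

lemma haar_nu: "haar K = nu"
  by (rule haar_is[OF K_borel nu_haarP])

end


lemma frac_cell:
  fixes p j :: int and X :: real
  assumes p: "p > 0" and j: "0 \<le> j" "j < p"
  shows "(of_int j / of_int p \<le> frac X \<and> frac X < (of_int j + 1) / of_int p) \<longleftrightarrow> \<lfloor>of_int p * X\<rfloor> mod p = j"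
proof -
  define m where "m = \<lfloor>of_int p * frac X\<rfloor>"
  have pX: "of_int p * X = of_int (p * \<lfloor>X\<rfloor>) + of_int p * frac X" by (simp add: frac_def algebra_simps)
  have fl0: "\<lfloor>of_int p * frac X + real_of_int (p * \<lfloor>X\<rfloor>)\<rfloor> = m + p * \<lfloor>X\<rfloor>"
    unfolding m_def by (rule floor_add_int[symmetric])
  have fl: "\<lfloor>of_int p * X\<rfloor> = p * \<lfloor>X\<rfloor> + m" using fl0 unfolding pX by (simp only: add.commute)
  have "0 \<le> of_int p * frac X" using p by simp
  then have m0: "0 \<le> m" unfolding m_def by simp
  have "of_int p * frac X < of_int p" using p frac_lt_1[of X] by simp
  then have mp: "m < p" unfolding m_def by (simp add: floor_less_iff)
  have md: "\<lfloor>of_int p * X\<rfloor> mod p = m" using fl m0 mp by simp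
  have "(of_int j / of_int p \<le> frac X \<and> frac X < (of_int j + 1) / of_int p) \<longleftrightarrow>
        (of_int j \<le> of_int p * frac X \<and> of_int p * frac X < of_int j + 1)"
    using p by (simp add: divide_le_eq less_divide_eq mult.commute)
  also have "\<dots> \<longleftrightarrow> m = j" unfolding m_def by (simp add: floor_eq_iff)
  finally show ?thesis using md by simp
qed

lemma Basis_vec_eq: "(Basis :: (real^'n) set) = range (\<lambda>i. axis i 1)"
  by (auto simp: Basis_vec_def)

lemma inj_axis1: "inj (\<lambda>i::'n::finite. axis i (1::real))"
  by (rule injI) (simp add: axis_eq_axis)

lemma sum_Basis_vec: "(\<Sum>b\<in>(Basis :: (real^'n) set). G b) = (\<Sum>i\<in>UNIV. G (axis i 1))"
  unfolding Basis_vec_eq by (simp add: sum.reindex[OF inj_axis1])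

lemma prod_Basis_vec: "(\<Prod>b\<in>(Basis :: (real^'n) set). G b) = (\<Prod>i\<in>UNIV. G (axis i 1))"
  unfolding Basis_vec_eq by (simp add: prod.reindex[OF inj_axis1])

lemma affine_emeasure:
  fixes h :: "real^'m \<Rightarrow> real^'m" and c :: "'m \<Rightarrow> real" and t :: "real^'m"
  assumes c: "\<And>i. c i \<noteq> 0" and h: "\<And>x. h x = (\<chi> i. c i * x$i + t$i)" and A: "A \<in> sets lebesgue"
  shows "h -` A \<in> sets lebesgue"
    and "emeasure lebesgue A = ennreal (\<Prod>i\<in>UNIV. \<bar>c i\<bar>) * emeasure lebesgue (h -` A)"
proof -
  define c' where "c' b = (\<Sum>k\<in>UNIV. c k * b$k)" for b :: "real^'m"
  have c'ax: "c' (axis i 1) = c i" for i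
    by (simp add: c'_def axis_def if_distrib cong: if_cong)
  have c'nz: "c' b \<noteq> 0" if "b \<in> Basis" for b
    using that c c'ax by (auto simp: Basis_vec_eq)
  define T where "T = (\<lambda>x. t + (\<Sum>j\<in>Basis. (c' j * (x \<bullet> j)) *\<^sub>R j))"
  have Th: "T = h"
  proof
    fix x
    have "(\<Sum>j\<in>Basis. (c' j * (x \<bullet> j)) *\<^sub>R j) $ a = c a * x$a" for a
    proof -
      have "(\<Sum>j\<in>Basis. (c' j * (x \<bullet> j)) *\<^sub>R j) $ a = (\<Sum>j\<in>Basis. c' j * (x \<bullet> j) * j $ a)"
        by (simp add: sum_component)
      also have "\<dots> = (\<Sum>i\<in>UNIV. c i * x$i * axis i 1 $ a)"
        by (simp add: sum_Basis_vec c'ax inner_axis)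
      also have "\<dots> = c a * x$a" by (simp add: axis_def if_distrib cong: if_cong)
      finally show ?thesis .
    qed
    then show "T x = h x" by (simp add: T_def h vec_eq_iff)
  qed
  have eq: "lebesgue = density (distr lebesgue lebesgue T) (\<lambda>_. (\<Prod>j\<in>Basis. \<bar>c' j\<bar>))"
    and Tm: "T \<in> lebesgue \<rightarrow>\<^sub>M lebesgue"
    using lebesgue_affine_euclidean[of c' t] lebesgue_affine_measurable[of c' t] c'nz
    unfolding T_def by auto
  have pr: "(\<Prod>j\<in>Basis. \<bar>c' j\<bar>) = (\<Prod>i\<in>UNIV. \<bar>c i\<bar>)"
    by (simp add: prod_Basis_vec c'ax)
  show hA: "h -` A \<in> sets lebesgue"
    using measurable_sets[OF Tm A] Th by simp
  have "emeasure lebesgue A = emeasure (density (distr lebesgue lebesgue T) (\<lambda>_. (\<Prod>j\<in>Basis. \<bar>c' j\<bar>))) A"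
    using eq by (rule arg_cong)
  also have "\<dots> = ennreal (\<Prod>j\<in>Basis. \<bar>c' j\<bar>) * emeasure (distr lebesgue lebesgue T) A"
    using A by (simp add: emeasure_density nn_integral_cmult_indicator)
  also have "\<dots> = ennreal (\<Prod>i\<in>UNIV. \<bar>c i\<bar>) * emeasure lebesgue (h -` A)"
    using A Tm Th pr by (simp add: emeasure_distr)
  finally show "emeasure lebesgue A = ennreal (\<Prod>i\<in>UNIV. \<bar>c i\<bar>) * emeasure lebesgue (h -` A)" .
qed



context cfg begin

definition Dint :: int where "Dint = \<lfloor>d\<rfloor>"

lemma d_eq: "d = of_int Dint" using dZ by (auto simp: Dint_def elim: Ints_cases)
lemma Dint1: "Dint \<ge> 1" using d1 d_eq by linarith

definition Pa :: "('m \<Rightarrow> int) \<Rightarrow> (real^'m) set" where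
  "Pa \<alpha> = {w \<in> torus. \<forall>s\<in>S. of_int (\<alpha> s) \<le> (Q *v w)$s \<and> (Q *v w)$s < of_int (\<alpha> s) + 1}"

definition hmap :: "nat \<Rightarrow> nat^'m \<Rightarrow> ('m \<Rightarrow> int) \<Rightarrow> real^'m \<Rightarrow> real^'m" where
  "hmap p j n u = (\<chi> a. if a \<in> S then u$a else d * real p * u$a - real (j$a) - real p * of_int (n a))"

definition Rb :: int where "Rb = \<lceil>\<Sum>a\<in>UNIV. \<Sum>b\<in>UNIV. \<bar>Q$a$b\<bar>\<rceil>"

definition Afin :: "('m \<Rightarrow> int) set" where "Afin = {\<alpha>. \<forall>a. \<alpha> a \<in> {-Rb..Rb}}"

definition Nfin :: "('m \<Rightarrow> int) set" where "Nfin = {n. \<forall>a. n a \<in> {0..Dint - 1}}"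

definition c0 :: real where
  "c0 = Min (insert 1 ((\<lambda>\<alpha>. measure lebesgue (Pa \<alpha>)) ` {\<alpha> \<in> Afin. 0 < measure lebesgue (Pa \<alpha>)}))"

definition nT :: nat where "nT = card (UNIV - S)"

lemma fin_funs: "finite (X :: 'b set) \<Longrightarrow> finite {\<alpha> :: 'm \<Rightarrow> 'b. \<forall>a. \<alpha> a \<in> X}"
proof -
  assume X: "finite X"
  have "{\<alpha> :: 'm \<Rightarrow> 'b. \<forall>a. \<alpha> a \<in> X} = PiE UNIV (\<lambda>_. X)" by (auto simp: PiE_def Pi_def)
  then show ?thesis using X by (simp add: finite_PiE)
qed

lemma Afin_fin: "finite Afin" unfolding Afin_def by (rule fin_funs) simp
lemma Nfin_fin: "finite Nfin" unfolding Nfin_def by (rule fin_funs) simp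

lemma Pa_torus: "Pa \<alpha> \<subseteq> torus" by (auto simp: Pa_def)

lemma Pa_borel: "Pa \<alpha> \<in> sets (borel :: (real^'m) measure)"
proof -
  have m: "(\<lambda>w::real^'m. (Q *v w)$s) \<in> borel_measurable borel" for s
    by (intro borel_measurable_continuous_onI continuous_intros)
  have "Pa \<alpha> = torus \<inter> (\<Inter>s\<in>S. {w. of_int (\<alpha> s) \<le> (Q *v w)$s} \<inter> {w. (Q *v w)$s < of_int (\<alpha> s) + 1})"
    by (auto simp: Pa_def)
  moreover have "{w. of_int (\<alpha> s) \<le> (Q *v w)$s} \<in> sets (borel :: (real^'m) measure)" for s
    using m[of s] by measurable
  moreover have "{w. (Q *v w)$s < of_int (\<alpha> s) + 1} \<in> sets (borel :: (real^'m) measure)" for s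
    using m[of s] by measurable
  ultimately show ?thesis using torus_borel by auto
qed

lemma Pa_leb: "Pa \<alpha> \<in> sets lebesgue" using Pa_borel by auto

lemma c0_pos: "c0 > 0"
proof -
  have fin: "finite (insert 1 ((\<lambda>\<alpha>. measure lebesgue (Pa \<alpha>)) ` {\<alpha> \<in> Afin. 0 < measure lebesgue (Pa \<alpha>)}))"
    using Afin_fin by simp
  show ?thesis unfolding c0_def using Min_gr_iff[OF fin] by auto
qed

lemma c0_le: "\<alpha> \<in> Afin \<Longrightarrow> 0 < measure lebesgue (Pa \<alpha>) \<Longrightarrow> c0 \<le> measure lebesgue (Pa \<alpha>)"
  unfolding c0_def using Afin_fin by (intro Min_le) auto

lemma hmap_aff:
  assumes p: "p \<ge> 1" and A: "A \<in> sets lebesgue"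
  shows "hmap p j n -` A \<in> sets lebesgue"
    and "emeasure lebesgue A = ennreal ((d * real p) ^ nT) * emeasure lebesgue (hmap p j n -` A)"
proof -
  define c where "c i = (if i \<in> S then 1 else d * real p)" for i
  define t :: "real^'m" where "t = (\<chi> a. if a \<in> S then 0 else - real (j$a) - real p * of_int (n a))"
  have c: "c i \<noteq> 0" for i using p d1 by (simp add: c_def)
  have h: "hmap p j n x = (\<chi> i. c i * x$i + t$i)" for x
    by (simp add: hmap_def c_def t_def vec_eq_iff)
  note aff = affine_emeasure[of c "hmap p j n" t A, OF c h A]
  show "hmap p j n -` A \<in> sets lebesgue" by (rule aff(1))
  have "(\<Prod>i\<in>UNIV. \<bar>c i\<bar>) = (\<Prod>i\<in>UNIV - S. d * real p)"
  proof -
    have "(\<Prod>i\<in>UNIV. \<bar>c i\<bar>) = (\<Prod>i\<in>UNIV. if i \<in> S then 1 else d * real p)"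
      using d1 by (intro prod.cong) (auto simp: c_def)
    also have "\<dots> = (\<Prod>i\<in>UNIV - S. d * real p)"
      by (simp add: prod.If_cases Compl_eq_Diff_UNIV)
    finally show ?thesis .
  qed
  also have "\<dots> = (d * real p) ^ nT" by (simp add: nT_def)
  finally show "emeasure lebesgue A = ennreal ((d * real p) ^ nT) * emeasure lebesgue (hmap p j n -` A)"
    using aff(2) by simp
qed

end


context cfg begin

lemma hmap_inv_torus:
  assumes p: "p \<ge> 1" and j: "\<forall>i. j$i < p" and n: "n \<in> Nfin" and w: "hmap p j n u \<in> torus"
  shows "u \<in> torus"
proof -
  have "0 \<le> u$a \<and> u$a < 1" for a
  proof (cases "a \<in> S")
    case True
    have "0 \<le> (hmap p j n u)$a \<and> (hmap p j n u)$a < 1" using w by (simp add: torus_def)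
    then show ?thesis using True by (simp add: hmap_def)
  next
    case False
    define wa where "wa = d * real p * u$a - real (j$a) - real p * of_int (n a)"
    have "0 \<le> (hmap p j n u)$a \<and> (hmap p j n u)$a < 1" using w by (simp add: torus_def)
    then have wa01: "0 \<le> wa" "wa < 1" using False by (simp_all add: hmap_def wa_def)
    have na: "0 \<le> n a" "n a \<le> Dint - 1" using n by (auto simp: Nfin_def)
    have ja: "real (j$a) \<le> real p - 1" using j[rule_format, of a] by linarith
    have na': "0 \<le> real_of_int (n a)" "real_of_int (n a) \<le> d - 1"
      using na d_eq by simp_all
    have "real p * real_of_int (n a) \<le> real p * (d - 1)"
      using na'(2) p by (intro mult_left_mono) auto
    have dpu: "d * real p * u$a = wa + real (j$a) + real p * of_int (n a)" by (simp add: wa_def)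
    have pos: "0 \<le> d * real p * u$a" using dpu wa01 na' p by simp
    have lt: "d * real p * u$a < d * real p * 1"
      using dpu wa01 ja \<open>real p * real_of_int (n a) \<le> real p * (d - 1)\<close> by (simp add: algebra_simps)
    have dp: "0 < d * real p" using d1 p by simp
    have "0 \<le> u$a" using pos dp by (simp add: zero_le_mult_iff)
    moreover have "u$a < 1" using lt dp by (simp only: mult_less_cancel_left_pos)
    ultimately show ?thesis by simp
  qed
  then show ?thesis by (simp add: torus_def)
qed

definition vv :: "nat \<Rightarrow> nat^'m \<Rightarrow> ('m \<Rightarrow> int) \<Rightarrow> real^'m" where
  "vv p j n = (\<chi> b. if b \<in> S then 0 else real (j$b) + real p * of_int (n b))"

lemma hmap_Q:
  assumes p: "p \<ge> 1"
  shows "real p *\<^sub>R (f + Q *v u) = (1/d) *\<^sub>R ((d * real p) *\<^sub>R f + Q *v vv p j n + Q *v hmap p j n u)"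
proof -
  define w where "w = hmap p j n u"
  define wT where "wT = (\<chi> b. if b \<in> S then 0 else w$b)"
  define uT where "uT = (\<chi> b. if b \<in> S then 0 else u$b)"
  have dp: "d * real p \<noteq> 0" using d1 p by simp
  have uT: "uT = (1 / (d * real p)) *\<^sub>R (wT + vv p j n)"
  proof -
    have "uT $ b = ((1 / (d * real p)) *\<^sub>R (wT + vv p j n)) $ b" for b
    proof (cases "b \<in> S")
      case True
      then show ?thesis by (simp add: uT_def wT_def vv_def)
    next
      case False
      have e: "u$b = (1 / (d * real p)) * ((d * real p * u$b - real (j$b) - real p * of_int (n b)) + (real (j$b) + real p * of_int (n b)))"
        using dp by (simp add: field_simps)
      show ?thesis using False e by (simp add: uT_def wT_def w_def hmap_def vv_def)
    qed
    then show ?thesis by (simp add: vec_eq_iff)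
  qed
  have Qw: "Q *v wT = Q *v w" unfolding wT_def by (rule Qv_T[symmetric])
  have "Q *v u = Q *v uT" unfolding uT_def by (rule Qv_T)
  also have "\<dots> = (1 / (d * real p)) *\<^sub>R (Q *v w + Q *v vv p j n)"
    by (simp add: uT matrix_vector_mult_scaleR matrix_vector_right_distrib Qw)
  finally have Qu: "Q *v u = (1 / (d * real p)) *\<^sub>R (Q *v w + Q *v vv p j n)" .
  have r: "real p * (x + (1 / (d * real p)) * (y + z)) = (1/d) * ((d * real p) * x + z + y)" for x y z
    using dp by (simp add: field_simps)
  show ?thesis
    unfolding vec_eq_iff Qu w_def using r by simp
qed

definition beta :: "nat \<Rightarrow> nat^'m \<Rightarrow> ('m \<Rightarrow> int) \<Rightarrow> real^'m \<Rightarrow> real^'m" where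
  "beta p j n f = (d * real p) *\<^sub>R f + Q *v vv p j n"

lemma beta_Z: "f \<in> F \<Longrightarrow> beta p j n f $ a \<in> \<int>"
proof -
  assume f: "f \<in> F"
  have "(d * real p) * f$a = real p * (d * f$a)" by simp
  then have 1: "(d * real p) * f$a \<in> \<int>" using F_dZ[OF f, of a] by (metis Ints_mult Ints_of_nat)
  have "intv (vv p j n)" by (simp add: intv_def vv_def)
  then have 2: "(Q *v vv p j n)$a \<in> \<int>" using intv_mv[OF QZ] by (simp add: intv_def)
  show ?thesis using 1 2 by (simp add: beta_def)
qed

lemma floor_pX:
  assumes p: "p \<ge> 1" and f: "f \<in> F" and w: "hmap p j n u \<in> Pa \<alpha>"
  shows "\<lfloor>real p * (f$a + (Q *v u)$a)\<rfloor> =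
    (if a \<in> S then (\<lfloor>beta p j n f $ a\<rfloor> + \<alpha> a) div Dint else int (j$a) + int p * n a)"
proof -
  define w where "w = hmap p j n u"
  define B where "B = beta p j n f"
  have e1: "real p *\<^sub>R (f + Q *v u) = (1/d) *\<^sub>R (B + Q *v w)"
    unfolding B_def beta_def w_def using hmap_Q[OF p, of f u j n] by (simp only: add.assoc)
  have pX: "real p * (f$a + (Q *v u)$a) = (1/d) * (B$a + (Q *v w)$a)"
    using arg_cong[OF e1, of "\<lambda>x. x $ a"] by (simp only: vector_scaleR_component vector_add_component real_scaleR_def)
  have "B $ a \<in> \<int>" unfolding B_def by (rule beta_Z[OF f])
  then obtain b where b: "B $ a = of_int b" by (auto elim: Ints_cases)
  have dD: "d = of_int Dint" by (rule d_eq)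
  show ?thesis
  proof (cases "a \<in> S")
    case True
    have y: "of_int (\<alpha> a) \<le> (Q *v w)$a" "(Q *v w)$a < of_int (\<alpha> a) + 1"
      using w True by (auto simp: Pa_def w_def)
    have fl: "\<lfloor>(Q *v w)$a\<rfloor> = \<alpha> a" using y by (simp only: floor_eq_iff)
    have e2: "(1/d) * (B$a + (Q *v w)$a) = (of_int b + (Q *v w)$a) / d"
      using b by (simp add: divide_inverse mult.commute)
    have "(1/d) * (B$a + (Q *v w)$a) = (of_int b + (Q *v w)$a) / real_of_int Dint"
      using e2 dD by metis
    then have "\<lfloor>real p * (f$a + (Q *v u)$a)\<rfloor> = \<lfloor>(of_int b + (Q *v w)$a) / real_of_int Dint\<rfloor>"
      using pX by simp
    also have "\<dots> = \<lfloor>of_int b + (Q *v w)$a\<rfloor> div Dint"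
      using Dint1 by (intro floor_divide_real_eq_div) simp
    also have "\<lfloor>of_int b + (Q *v w)$a\<rfloor> = b + \<alpha> a" using fl int_add_floor[of b "(Q *v w)$a"] by simp
    finally show ?thesis using True b unfolding B_def by simp
  next
    case False
    have wt: "0 \<le> w$a" "w$a < 1"
    proof -
      have "w \<in> torus" using w by (auto simp: Pa_def w_def)
      then have "0 \<le> w$a \<and> w$a < 1" by (simp add: torus_def)
      then show "0 \<le> w$a" "w$a < 1" by simp_all
    qed
    have fa: "f$a = 0" using F_T[OF f False] .
    have q1: "(Q *v w)$a = d * w$a" by (rule Qt[OF False])
    have q2: "(Q *v vv p j n)$a = d * vv p j n $ a" by (rule Qt[OF False])
    have Ba: "B$a = d * vv p j n $ a" unfolding B_def beta_def using fa q2 by simp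
    have "(1/d) * (B$a + (Q *v w)$a) = vv p j n $ a + w$a"
      unfolding Ba q1 using d1 by (simp add: field_simps)
    also have "vv p j n $ a = of_int (int (j$a) + int p * n a)" using False by (simp add: vv_def)
    finally have e: "real p * (f$a + (Q *v u)$a) = of_int (int (j$a) + int p * n a) + w$a" using pX by simp
    have fw: "\<lfloor>w$a\<rfloor> = 0" using wt by (simp only: floor_eq_iff) simp
    have "\<lfloor>of_int (int (j$a) + int p * n a) + w$a\<rfloor> = int (j$a) + int p * n a"
      using int_add_floor[of "int (j$a) + int p * n a" "w$a"] fw by simp
    then show ?thesis using False e by simp
  qed
qed

lemma gridbox_iff:
  assumes p: "p \<ge> 1" and j: "\<forall>i. j$i < p"
  shows "tadd f (Q *v u) \<in> gridbox p j \<longleftrightarrow> (\<forall>a. \<lfloor>real p * (f$a + (Q *v u)$a)\<rfloor> mod int p = int (j$a))"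
proof -
  have "(real (j$a) / real p \<le> frac (f$a + (Q *v u)$a) \<and> frac (f$a + (Q *v u)$a) < (real (j$a) + 1) / real p)
        \<longleftrightarrow> \<lfloor>real p * (f$a + (Q *v u)$a)\<rfloor> mod int p = int (j$a)" for a
    using frac_cell[of "int p" "int (j$a)" "f$a + (Q *v u)$a"] p j by simp
  then show ?thesis by (simp add: gridbox_def tadd_def)
qed

lemma dichotomy:
  assumes p: "p \<ge> 1" and j: "\<forall>i. j$i < p" and f: "f \<in> F" and n: "n \<in> Nfin"
    and w: "hmap p j n u \<in> Pa \<alpha>" and w': "hmap p j n u' \<in> Pa \<alpha>"
    and u: "g (f, u) \<in> gridbox p j"
  shows "g (f, u') \<in> gridbox p j"
proof -
  have "\<lfloor>real p * (f$a + (Q *v u')$a)\<rfloor> = \<lfloor>real p * (f$a + (Q *v u)$a)\<rfloor>" for a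
    using floor_pX[OF p f w] floor_pX[OF p f w'] by simp
  then show ?thesis using u gridbox_iff[OF p j] by (simp add: g_def)
qed

end


context cfg begin

lemma Q_bound:
  assumes w: "w \<in> torus"
  shows "\<bar>(Q *v w)$a\<bar> \<le> of_int Rb"
proof -
  have "\<bar>(Q *v w)$a\<bar> = \<bar>\<Sum>b\<in>UNIV. Q$a$b * w$b\<bar>" by (simp add: matrix_vector_mult_def)
  also have "\<dots> \<le> (\<Sum>b\<in>UNIV. \<bar>Q$a$b * w$b\<bar>)" by (rule sum_abs)
  also have "\<dots> \<le> (\<Sum>b\<in>UNIV. \<bar>Q$a$b\<bar>)"
  proof (rule sum_mono)
    fix b
    have "0 \<le> w$b \<and> w$b < 1" using w by (simp add: torus_def)
    then have "\<bar>w$b\<bar> \<le> 1" by simp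
    then have "\<bar>Q$a$b\<bar> * \<bar>w$b\<bar> \<le> \<bar>Q$a$b\<bar> * 1" by (intro mult_left_mono) auto
    then show "\<bar>Q$a$b * w$b\<bar> \<le> \<bar>Q$a$b\<bar>" by (simp add: abs_mult)
  qed
  also have "\<dots> \<le> (\<Sum>a'\<in>UNIV. \<Sum>b\<in>UNIV. \<bar>Q$a'$b\<bar>)"
    by (rule member_le_sum[of a UNIV "\<lambda>a'. \<Sum>b\<in>UNIV. \<bar>Q$a'$b\<bar>"]) (auto intro: sum_nonneg)
  also have "\<dots> \<le> of_int Rb" unfolding Rb_def by (rule le_of_int_ceiling)
  finally show ?thesis .
qed

lemma cover:
  assumes p: "p \<ge> 1" and j: "\<forall>i. j$i < p" and f: "f \<in> F" and u: "u \<in> torus"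
    and ug: "g (f, u) \<in> gridbox p j"
  shows "\<exists>n\<in>Nfin. \<exists>\<alpha>\<in>Afin. hmap p j n u \<in> Pa \<alpha>"
proof -
  define n where "n a = \<lfloor>d * u$a\<rfloor>" for a
  have ua: "0 \<le> u$a" "u$a < 1" for a using u by (simp_all add: torus_def)
  have nN: "n \<in> Nfin"
  proof -
    have "0 \<le> n a \<and> n a \<le> Dint - 1" for a
    proof -
      have "0 \<le> d * u$a" using ua d1 by simp
      moreover have "d * u$a < d * 1" using ua d1 by (intro mult_strict_left_mono) auto
      ultimately have "0 \<le> d * u$a" "d * u$a < of_int Dint" using d_eq by simp_all
      then show ?thesis unfolding n_def by (simp add: floor_less_iff)
    qed
    then show ?thesis by (simp add: Nfin_def)
  qed
  define w where "w = hmap p j n u"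
  have wt: "w \<in> torus"
  proof -
    have "0 \<le> w$a \<and> w$a < 1" for a
    proof (cases "a \<in> S")
      case True
      then show ?thesis using ua by (simp add: w_def hmap_def)
    next
      case False
      have ge: "g (f, u) $ a = frac (d * u$a)"
        using F_T[OF f False] Qt[OF False] by (simp add: g_def tadd_def)
      have gbx: "real (j$a) / real p \<le> g (f, u) $ a \<and> g (f, u) $ a < (real (j$a) + 1) / real p"
        using ug unfolding gridbox_def by blast
      then have gb: "real (j$a) / real p \<le> frac (d * u$a)" "frac (d * u$a) < (real (j$a) + 1) / real p"
        using ge by simp_all
      have pp: "real p > 0" using p by simp
      have g1: "real (j$a) \<le> real p * frac (d * u$a)" using gb(1) pp by (simp add: divide_le_eq mult.commute)
      have g2: "real p * frac (d * u$a) < real (j$a) + 1" using gb(2) pp by (simp add: less_divide_eq mult.commute)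
      have "w$a = real p * frac (d * u$a) - real (j$a)"
        using False by (simp add: w_def hmap_def n_def frac_def algebra_simps)
      then show ?thesis using g1 g2 by simp
    qed
    then show ?thesis by (simp add: torus_def)
  qed
  define \<alpha> where "\<alpha> a = \<lfloor>(Q *v w)$a\<rfloor>" for a
  have aA: "\<alpha> \<in> Afin"
  proof -
    have "\<alpha> a \<in> {-Rb..Rb}" for a
    proof -
      have b: "\<bar>(Q *v w)$a\<bar> \<le> of_int Rb" by (rule Q_bound[OF wt])
      then have "- of_int Rb \<le> (Q *v w)$a" "(Q *v w)$a \<le> of_int Rb" by linarith+
      then show ?thesis unfolding \<alpha>_def by (simp add: le_floor_iff floor_le_iff)
    qed
    then show ?thesis by (simp add: Afin_def)
  qed
  have "w \<in> Pa \<alpha>"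
    using wt by (simp add: Pa_def \<alpha>_def of_int_floor_le)
  then show ?thesis using nN aA unfolding w_def by blast
qed

lemma finite_emeasure_torus:
  fixes X :: "(real^'m) set"
  assumes X: "X \<subseteq> torus" "X \<in> sets lebesgue"
  shows "emeasure lebesgue X = ennreal (measure lebesgue X)"
proof -
  have "emeasure lebesgue X \<le> emeasure lebesgue (torus :: (real^'m) set)"
    using X(1) torus_leb by (rule emeasure_mono)
  then have le1: "emeasure lebesgue X \<le> 1" by (metis torus_emeasure)
  have "emeasure lebesgue X \<noteq> top"
  proof
    assume "emeasure lebesgue X = top"
    then have "(top::ennreal) \<le> 1" using le1 by simp
    then show False by (simp add: top_unique)
  qed
  then show ?thesis by (rule emeasure_eq_ennreal_measure)
qed

lemma key:
  assumes p: "p \<ge> 1" and j: "\<forall>i. j$i < p" and f: "f \<in> F"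
    and Us: "{u \<in> torus. g (f, u) \<in> gridbox p j} \<in> sets lebesgue"
    and U0: "emeasure lebesgue {u \<in> torus. g (f, u) \<in> gridbox p j} \<noteq> 0"
  shows "ennreal (c0 / (d * real p) ^ nT) \<le> emeasure lebesgue {u \<in> torus. g (f, u) \<in> gridbox p j}"
proof -
  define U where "U = {u \<in> torus. g (f, u) \<in> gridbox p j}"
  define V where "V x = hmap p j (fst x) -` Pa (snd x)" for x
  define Idx where "Idx = Nfin \<times> Afin"
  have finI: "finite Idx" using Nfin_fin Afin_fin by (simp add: Idx_def)
  have Vs: "V x \<in> sets lebesgue" for x unfolding V_def by (rule hmap_aff(1)[OF p Pa_leb])
  have VUs: "V x \<inter> U \<in> sets lebesgue" for x using Vs Us by (simp add: U_def)
  have sub: "U \<subseteq> (\<Union>x\<in>Idx. V x \<inter> U)"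
  proof
    fix u assume u: "u \<in> U"
    then have "u \<in> torus" "g (f, u) \<in> gridbox p j" by (simp_all add: U_def)
    then obtain n \<alpha> where "n \<in> Nfin" "\<alpha> \<in> Afin" "hmap p j n u \<in> Pa \<alpha>"
      using cover[OF p j f] by blast
    then show "u \<in> (\<Union>x\<in>Idx. V x \<inter> U)" using u by (auto simp: Idx_def V_def intro!: bexI[of _ "(n, \<alpha>)"])
  qed
  have UVs: "(\<Union>x\<in>Idx. V x \<inter> U) \<in> sets lebesgue"
    using finI VUs by (intro sets.finite_UN) auto
  have "emeasure lebesgue U \<le> emeasure lebesgue (\<Union>x\<in>Idx. V x \<inter> U)"
    using sub UVs by (rule emeasure_mono)
  also have "\<dots> \<le> (\<Sum>x\<in>Idx. emeasure lebesgue (V x \<inter> U))"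
    using VUs finI by (intro emeasure_subadditive_finite) auto
  finally have le: "emeasure lebesgue U \<le> (\<Sum>x\<in>Idx. emeasure lebesgue (V x \<inter> U))" .
  have "\<exists>x\<in>Idx. emeasure lebesgue (V x \<inter> U) \<noteq> 0"
  proof (rule ccontr)
    assume "\<not> ?thesis"
    then have "(\<Sum>x\<in>Idx. emeasure lebesgue (V x \<inter> U)) = 0" by simp
    then show False using le U0 by (simp add: U_def)
  qed
  then obtain n \<alpha> where x: "(n, \<alpha>) \<in> Idx" and nz: "emeasure lebesgue (V (n, \<alpha>) \<inter> U) \<noteq> 0" by auto
  have nN: "n \<in> Nfin" and aA: "\<alpha> \<in> Afin" using x by (auto simp: Idx_def)
  have "V (n, \<alpha>) \<inter> U \<noteq> {}" using nz by auto
  then obtain u0 where u0: "u0 \<in> V (n, \<alpha>)" "u0 \<in> U" by blast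
  have VU: "V (n, \<alpha>) \<subseteq> U"
  proof
    fix u assume u: "u \<in> V (n, \<alpha>)"
    then have hu: "hmap p j n u \<in> Pa \<alpha>" by (simp add: V_def)
    then have ut: "u \<in> torus" using hmap_inv_torus[OF p j nN] Pa_torus by blast
    have "g (f, u) \<in> gridbox p j"
      by (rule dichotomy[OF p j f nN _ hu]) (use u0 in \<open>auto simp: V_def U_def\<close>)
    then show "u \<in> U" using ut by (simp add: U_def)
  qed
  have Ut: "U \<subseteq> torus" by (auto simp: U_def)
  have eV: "emeasure lebesgue (V (n, \<alpha>)) = ennreal (measure lebesgue (V (n, \<alpha>)))"
    using VU Ut Vs by (intro finite_emeasure_torus) auto
  have eP: "emeasure lebesgue (Pa \<alpha>) = ennreal (measure lebesgue (Pa \<alpha>))"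
    using Pa_torus Pa_leb by (rule finite_emeasure_torus)
  define Kc where "Kc = (d * real p) ^ nT"
  have Kc: "Kc > 0" using d1 p by (simp add: Kc_def)
  have "emeasure lebesgue (Pa \<alpha>) = ennreal Kc * emeasure lebesgue (V (n, \<alpha>))"
    unfolding Kc_def V_def by (simp add: hmap_aff(2)[OF p Pa_leb])
  then have "ennreal (measure lebesgue (Pa \<alpha>)) = ennreal (Kc * measure lebesgue (V (n, \<alpha>)))"
    using eV eP Kc by (simp add: ennreal_mult)
  then have mPV: "measure lebesgue (Pa \<alpha>) = Kc * measure lebesgue (V (n, \<alpha>))"
    using Kc by (subst (asm) ennreal_inj) auto
  have "emeasure lebesgue (V (n, \<alpha>) \<inter> U) \<le> emeasure lebesgue (V (n, \<alpha>))"
    using Vs by (intro emeasure_mono) auto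
  then have "emeasure lebesgue (V (n, \<alpha>)) \<noteq> 0" using nz by (auto simp: le_zero_eq)
  then have "measure lebesgue (V (n, \<alpha>)) \<noteq> 0" using eV by simp
  then have mV: "measure lebesgue (V (n, \<alpha>)) > 0" using measure_nonneg[of lebesgue "V (n, \<alpha>)"] by linarith
  then have "measure lebesgue (Pa \<alpha>) > 0" using mPV Kc by simp
  then have "c0 \<le> measure lebesgue (Pa \<alpha>)" by (rule c0_le[OF aA])
  then have "c0 / Kc \<le> measure lebesgue (V (n, \<alpha>))" using mPV Kc by (simp add: divide_le_eq mult.commute)
  then have "ennreal (c0 / Kc) \<le> emeasure lebesgue (V (n, \<alpha>))" using eV by (simp add: ennreal_leI)
  also have "\<dots> \<le> emeasure lebesgue U" using VU Us by (intro emeasure_mono) (auto simp: U_def)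
  finally show ?thesis by (simp add: U_def Kc_def)
qed

end


lemma gridbox_borel: "gridbox p j \<in> sets (borel :: (real^'m) measure)"
  unfolding gridbox_def by measurable

context cfg begin

lemma nT_eq: "nT = CARD('m) - CARD('r)"
  unfolding nT_def using cS by (simp add: card_Diff_subset)

lemma main:
  "\<exists>lamstar > 0. \<exists>p0::nat. \<forall>p::nat. \<forall>j::nat^'m.
           p \<ge> p0 \<longrightarrow> inJ L p j \<longrightarrow> lam L p j \<ge> lamstar"
proof -
  define cF where "cF = real (card F)"
  have cF: "cF > 0" using F_fin F_ne by (simp add: cF_def card_gt_0_iff)
  define lamstar where "lamstar = c0 / (cF * d ^ nT)"
  have ls: "lamstar > 0" using c0_pos cF d1 by (simp add: lamstar_def)
  have bound: "lam L p j \<ge> lamstar" if p: "p \<ge> 1" and J: "inJ L p j" for p j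
  proof -
    define B where "B = gridbox p j"
    have jlt: "\<forall>i. j$i < p" using J by (simp add: inJ_def)
    have muL: "muL L = nu" by (rule haar_nu)
    have pos: "measure nu (B \<inter> K) > 0" using J by (simp add: inJ_def muL B_def)
    have "B \<inter> K \<in> sets borel" unfolding B_def by (rule sets.Int[OF gridbox_borel K_borel])
    then have BK: "B \<inter> K \<in> sets (restrict_space borel K)"
      using K_borel by (simp add: sets_restrict_space_iff)
    define Z where "Z = g -` (B \<inter> K) \<inter> space M"
    have Z: "Z \<in> sets M" unfolding Z_def by (rule measurable_sets[OF g_meas BK])
    define Uf where "Uf f = {u \<in> torus. g (f, u) \<in> B}" for f
    have slZ: "Pair f -` Z = Uf f" if "f \<in> F" for f
      using that g_K by (auto simp: Z_def Uf_def space_M)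
    interpret pnu: prob_space nu by (rule prob_nu)
    have e1: "ennreal (measure nu (B \<inter> K)) = (\<Sum>f\<in>F. ennreal (1 / cF) * emeasure lebesgue (Uf f))"
    proof -
      have "ennreal (measure nu (B \<inter> K)) = emeasure nu (B \<inter> K)" by (simp add: pnu.emeasure_eq_measure)
      also have "\<dots> = emeasure M Z" unfolding Z_def by (rule emeasure_nu[OF BK])
      also have "\<dots> = (\<Sum>f\<in>F. ennreal (1 / real (card F)) * emeasure lebesgue (Pair f -` Z))" by (rule emM[OF Z])
      also have "\<dots> = (\<Sum>f\<in>F. ennreal (1 / cF) * emeasure lebesgue (Uf f))"
        by (rule sum.cong) (simp_all add: slZ cF_def)
      finally show ?thesis .
    qed
    have "\<exists>f\<in>F. emeasure lebesgue (Uf f) \<noteq> 0"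
    proof (rule ccontr)
      assume "\<not> ?thesis"
      then have "(\<Sum>f\<in>F. ennreal (1 / cF) * emeasure lebesgue (Uf f)) = 0" by simp
      then have "measure nu (B \<inter> K) = 0" using e1 pos by simp
      then show False using pos by simp
    qed
    then obtain f where f: "f \<in> F" and nz: "emeasure lebesgue (Uf f) \<noteq> 0" by blast
    have Ufs: "Uf f \<in> sets lebesgue" using Pair_sets[OF Z, of f] slZ[OF f] by (simp add: sets_Tor_iff)
    have k: "ennreal (c0 / (d * real p) ^ nT) \<le> emeasure lebesgue (Uf f)"
      using key[OF p jlt f] Ufs nz by (simp add: Uf_def B_def)
    have "ennreal (1 / cF) * ennreal (c0 / (d * real p) ^ nT) \<le> ennreal (1 / cF) * emeasure lebesgue (Uf f)"
      using k by (rule mult_left_mono) simp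
    also have "\<dots> \<le> (\<Sum>f\<in>F. ennreal (1 / cF) * emeasure lebesgue (Uf f))"
      using f F_fin by (intro member_le_sum) auto
    also have "\<dots> = ennreal (measure nu (B \<inter> K))" using e1 by simp
    finally have fin: "ennreal (1 / cF) * ennreal (c0 / (d * real p) ^ nT) \<le> ennreal (measure nu (B \<inter> K))" .
    have nn2: "0 \<le> c0 / (d * real p) ^ nT" using c0_pos d1 by simp
    have eqm: "ennreal (1 / cF) * ennreal (c0 / (d * real p) ^ nT) = ennreal (1 / cF * (c0 / (d * real p) ^ nT))"
      by (rule ennreal_mult[symmetric]) (use cF nn2 in auto)
    have "ennreal (1 / cF * (c0 / (d * real p) ^ nT)) \<le> ennreal (measure nu (B \<inter> K))"
      using fin unfolding eqm .
    then have mb: "1 / cF * (c0 / (d * real p) ^ nT) \<le> measure nu (B \<inter> K)"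
      by (simp add: ennreal_le_iff)
    have pp: "real p > 0" using p by simp
    have "lamstar = real p ^ nT * (1 / cF * (c0 / (d * real p) ^ nT))"
      using pp d1 cF by (simp add: lamstar_def power_mult_distrib field_simps)
    also have "\<dots> \<le> real p ^ nT * measure nu (B \<inter> K)"
      using mb by (rule mult_left_mono) simp
    also have "\<dots> = lam L p j" by (simp add: lam_def muL B_def nT_eq)
    finally show ?thesis .
  qed
  show ?thesis using ls bound by (intro exI[of _ lamstar] conjI exI[of _ 1]) auto
qed

end

theorem lemma3p1:
  fixes L :: "int^'m^'r"
  assumes "rank (realmat L) = CARD('r)"
  shows "\<exists>lamstar > 0. \<exists>p0::nat. \<forall>p::nat. \<forall>j::nat^'m.
           p \<ge> p0 \<longrightarrow> inJ L p j \<longrightarrow> lam L p j \<ge> lamstar"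
proof -
  obtain S E d where A: "d \<ge> 1" "d \<in> \<int>" "card S = CARD('r)"
    "\<forall>a i. E$a$i \<in> \<int>" "\<forall>a i. a \<notin> S \<longrightarrow> E$a$i = 0"
    "\<forall>i i'. (realmat L ** E)$i$i' = (if i = i' then d else 0)"
    "\<forall>y. (\<forall>a. a \<notin> S \<longrightarrow> y$a = 0) \<longrightarrow> realmat L *v y = 0 \<longrightarrow> y = 0"
    using partA[OF assms] by blast
  interpret c: cfg L S E d
    by unfold_locales (use A in auto)
  show ?thesis by (rule c.main)
qed


end
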